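(* Let $\xi$ be an American option and let $\mathcal{Z}^{\mathrm{ad}}_0\subseteq\mathbb{R}^d$ be given by the construction in the context. Then \[ \mathcal{Z}^{\mathrm{ad}}_0=\{x\in\mathbb{R}^d:\exists Y\in\Phi^{\mathrm{ag}}(\xi),\ x=Y_0\}, \] and for each $j=1,\ldots,d$ the ask price satisfies $\pi^{\mathrm{ag}}_j(\xi)=\min\{x\in\mathbb{R}: xe^j\in\mathcal{Z}^{\mathrm{ad}}_0\}$ (the minimum being attained). Moreover, there exists $Y\in\Phi^{\mathrm{ag}}(\xi)$ with $Y_0=\pi^{\mathrm{ag}}_j(\xi)e^j$.
   Context: Finite filtered probability space $(\Omega,\mathcal{F},\mathbb{P};(\mathcal{F}_t)_{t=0}^T)$, $\mathcal{F}_0$ trivial, $\mathcal{F}_T=2^\Omega$, $\mathbb{P}(\{\omega\})>0$. $\Omega_t$: atoms (nodes) of $\mathcal{F}_t$; for $\mu\in\Omega_t$, $t<T$, $\mathrm{succ}\,\mu=\{\nu\in\Omega_{t+1}:\nu\subseteq\mu\}$. $\mathcal{L}_t$: $\mathcal{F}_t$-measurable $\mathbb{R}^d$-valued random variables (functions on $\Omega_t$). $d$ assets with $\mathcal{F}_t$-measurable exchange rates $\pi^{jk}_t>0$, $\pi^{jj}_t=1$. For $\mu\in\Omega_t$, $\mathcal{K}^\mu_t$ is the convex cone generated by $e^1,\ldots,e^d$ and $\pi^{jk}_t(\mu)e^j-e^k$, and $\mathcal{K}_t=\{x\in\mathcal{L}_t:x(\mu)\in\mathcal{K}^\mu_t\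 \forall\mu\}$. Deferred solvency cone $\mathcal{Q}_t$: set of $z\in\mathcal{L}_t$ for which there are $y_{t+1},\ldots,y_{T+1}$, $y_s\in\mathcal{L}_{s-1}$, $y_{T+1}=0$, with $z-y_{t+1}\in\mathcal{K}_t$, $y_s-y_{s+1}\in\mathcal{K}_s$ ($s=t+1,\ldots,T$); $\mathcal{Q}^\mu_t=\{z(\mu):z\in\mathcal{Q}_t\}$. Trading strategies $\Phi$: $y=(y_t)_{t=0}^{T+1}$, $y_0\in\mathbb{R}^d$, $y_t\in\mathcal{L}_{t-1}$, $y_{T+1}=0$. Mixed stopping times $\mathcal{X}$: adapted $[0,1]$-valued $\chi$ with $\sum_t\chi_t=1$. American option: adapted $\mathbb{R}^d$-valued $\xi=(\xi_t)_{t=0}^T$. $\Phi^{\mathrm{ag}}(\xi)$: maps $Y:\mathcal{X}\to\Phi$ with $Y^\chi_t-\chi_t\xi_t-Y^\chi_{t+1}\in\mathcal{K}_t$ for all $\chi$, $t=0,\ldots,T$, and non-anticipating: $\chi_s(\omega)=\chi'_s(\omega)$ for $s<t$ implies $Y^\chi_t(\omega)=Y^{\chi'}_t(\omega)$; $Y_0$ is the common value of $Y^\chi_0$. Ask price: $\pi^{\mathrm{ag}}_j(\xi)=\inf\{x\in\mathbb{R}:\exists Y\in\Phi^{\mathrm{ag}}(\xi),\ xe^j=Y_0\}$. Construction (node by node): for $t=0,\ldots,T$ and $\mu\in\Omega_t$, $\mathcal{U}^{\mathrm{ad}\mu}_t=\xi_t(\mu)+\mathcal{Q}^\mu_t$;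 for $\mu\in\Omega_T$, $\mathcal{Z}^{\mathrm{ad}\mu}_T=\mathcal{V}^{\mathrm{ad}\mu}_T=\mathcal{W}^{\mathrm{ad}\mu}_T=\mathcal{U}^{\mathrm{ad}\mu}_T$; backwards for $t=T-1,\ldots,0$ and $\mu\in\Omega_t$: $\mathcal{W}^{\mathrm{ad}\mu}_t=\bigcap_{\nu\in\mathrm{succ}\,\mu}\mathcal{Z}^{\mathrm{ad}\nu}_{t+1}$, $\mathcal{V}^{\mathrm{ad}\mu}_t=\mathcal{W}^{\mathrm{ad}\mu}_t+\mathcal{Q}^\mu_t$, $\mathcal{Z}^{\mathrm{ad}\mu}_t=\mathcal{U}^{\mathrm{ad}\mu}_t\cap\mathcal{V}^{\mathrm{ad}\mu}_t$. $\mathcal{Z}^{\mathrm{ad}}_0$ denotes the set at the single node of $\Omega_0$. Standing assumption: no arbitrage (no $y\in\Phi$ with $y_0=0$, $y_t-y_{t+1}\in\mathcal{K}_t$ for $t<T$ and $y_T-x\in\mathcal{K}_T$ for some nonzero componentwise non-negative $x\in\mathcal{L}_T$). *)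

theory Defs
  imports "HOL-Analysis.Analysis"
begin

(* Conventions:
   - the sample space Omega is the (finite) universe of the type 'w;
   - the filtration is given by its atoms: F t :: 'w set set is the partition Omega_t;
   - assets are indexed by a finite type 'd, vectors in R^d are real^'d, e^j = axis j 1;
   - random variables / processes are functions 'w => ..., nat-indexed in time;
     "x in L_t" is "meas (F t) x" (constant on the atoms of F t). *)

definition meas :: "'w set set \<Rightarrow> ('w \<Rightarrow> 'a) \<Rightarrow> bool" where
  "meas P x \<longleftrightarrow> (\<forall>\<mu>\<in>P. \<forall>\<omega>\<in>\<mu>. \<forall>\<omega>'\<in>\<mu>. x \<omega> = x \<omega>')"

definition Kcone :: "(nat \<Rightarrow> 'w \<Rightarrow> 'd \<Rightarrow> 'd \<Rightarrow> real) \<Rightarrow> nat \<Rightarrow> 'w \<Rightarrow> (real^'d::finite) set" where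
  "Kcone ex t \<omega> = convex_cone hull
     (range (\<lambda>j. axis j 1) \<union> {ex t \<omega> j k *\<^sub>R axis j 1 - axis k 1 | j k. True})"

definition inK :: "(nat \<Rightarrow> 'w \<Rightarrow> 'd \<Rightarrow> 'd \<Rightarrow> real) \<Rightarrow> nat \<Rightarrow> ('w \<Rightarrow> real^'d::finite) \<Rightarrow> bool" where
  "inK ex t x \<longleftrightarrow> (\<forall>\<omega>. x \<omega> \<in> Kcone ex t \<omega>)"

definition Qset :: "(nat \<Rightarrow> 'w set set) \<Rightarrow> nat \<Rightarrow> (nat \<Rightarrow> 'w \<Rightarrow> 'd \<Rightarrow> 'd \<Rightarrow> real) \<Rightarrow> nat
    \<Rightarrow> ('w \<Rightarrow> real^'d::finite) set" where
  "Qset F T ex t = {z. meas (F t) z \<and>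
     (\<exists>y :: nat \<Rightarrow> 'w \<Rightarrow> real^'d.
        (\<forall>s\<in>{t+1..T+1}. meas (F (s - 1)) (y s)) \<and> y (T+1) = (\<lambda>_. 0) \<and>
        inK ex t (\<lambda>\<omega>. z \<omega> - y (t+1) \<omega>) \<and>
        (\<forall>s\<in>{t+1..T}. inK ex s (\<lambda>\<omega>. y s \<omega> - y (Suc s) \<omega>)))}"

definition Qnode :: "(nat \<Rightarrow> 'w set set) \<Rightarrow> nat \<Rightarrow> (nat \<Rightarrow> 'w \<Rightarrow> 'd \<Rightarrow> 'd \<Rightarrow> real) \<Rightarrow> nat
    \<Rightarrow> 'w set \<Rightarrow> (real^'d::finite) set" where
  "Qnode F T ex t \<mu> = {z \<omega> | z \<omega>. z \<in> Qset F T ex t \<and> \<omega> \<in> \<mu>}"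

definition succ :: "(nat \<Rightarrow> 'w set set) \<Rightarrow> nat \<Rightarrow> 'w set \<Rightarrow> 'w set set" where
  "succ F t \<mu> = {\<nu> \<in> F (Suc t). \<nu> \<subseteq> \<mu>}"

definition Unode :: "(nat \<Rightarrow> 'w set set) \<Rightarrow> nat \<Rightarrow> (nat \<Rightarrow> 'w \<Rightarrow> 'd \<Rightarrow> 'd \<Rightarrow> real)
    \<Rightarrow> (nat \<Rightarrow> 'w \<Rightarrow> real^'d::finite) \<Rightarrow> nat \<Rightarrow> 'w set \<Rightarrow> (real^'d) set" where
  "Unode F T ex xi t \<mu> = {xi t \<omega> + q | \<omega> q. \<omega> \<in> \<mu> \<and> q \<in> Qnode F T ex t \<mu>}"

text \<open>Backward construction; Zrec ... k mu is Z^{ad mu}_{T-k}.\<close>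
fun Zrec :: "(nat \<Rightarrow> 'w set set) \<Rightarrow> nat \<Rightarrow> (nat \<Rightarrow> 'w \<Rightarrow> 'd \<Rightarrow> 'd \<Rightarrow> real)
    \<Rightarrow> (nat \<Rightarrow> 'w \<Rightarrow> real^'d::finite) \<Rightarrow> nat \<Rightarrow> 'w set \<Rightarrow> (real^'d) set" where
  "Zrec F T ex xi 0 \<mu> = Unode F T ex xi T \<mu>"
| "Zrec F T ex xi (Suc k) \<mu> =
     Unode F T ex xi (T - Suc k) \<mu> \<inter>
     {w + q | w q. w \<in> (\<Inter>\<nu>\<in>succ F (T - Suc k) \<mu>. Zrec F T ex xi k \<nu>)
                  \<and> q \<in> Qnode F T ex (T - Suc k) \<mu>}"

definition Zad :: "(nat \<Rightarrow> 'w set set) \<Rightarrow> nat \<Rightarrow> (nat \<Rightarrow> 'w \<Rightarrow> 'd \<Rightarrow> 'd \<Rightarrow> real)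
    \<Rightarrow> (nat \<Rightarrow> 'w \<Rightarrow> real^'d::finite) \<Rightarrow> nat \<Rightarrow> 'w set \<Rightarrow> (real^'d) set" where
  "Zad F T ex xi t \<mu> = Zrec F T ex xi (T - t) \<mu>"

definition Zad0 :: "(nat \<Rightarrow> 'w set set) \<Rightarrow> nat \<Rightarrow> (nat \<Rightarrow> 'w \<Rightarrow> 'd \<Rightarrow> 'd \<Rightarrow> real)
    \<Rightarrow> (nat \<Rightarrow> 'w \<Rightarrow> real^'d::finite) \<Rightarrow> (real^'d) set" where
  "Zad0 F T ex xi = Zad F T ex xi 0 UNIV"

definition trading_strategy :: "(nat \<Rightarrow> 'w set set) \<Rightarrow> nat \<Rightarrow> (nat \<Rightarrow> 'w \<Rightarrow> real^'d::finite) \<Rightarrow> bool" where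
  "trading_strategy F T y \<longleftrightarrow> (\<forall>\<omega> \<omega>'. y 0 \<omega> = y 0 \<omega>') \<and>
     (\<forall>t\<in>{1..T+1}. meas (F (t - 1)) (y t)) \<and> y (T+1) = (\<lambda>_. 0)"

definition mixed_stopping_times :: "(nat \<Rightarrow> 'w set set) \<Rightarrow> nat \<Rightarrow> (nat \<Rightarrow> 'w \<Rightarrow> real) set" where
  "mixed_stopping_times F T = {chi. (\<forall>t\<le>T. meas (F t) (chi t)) \<and>
     (\<forall>t\<le>T. \<forall>\<omega>. 0 \<le> chi t \<omega> \<and> chi t \<omega> \<le> 1) \<and> (\<forall>\<omega>. (\<Sum>t\<le>T. chi t \<omega>) = 1)}"

definition Phi_ag :: "(nat \<Rightarrow> 'w set set) \<Rightarrow> nat \<Rightarrow> (nat \<Rightarrow> 'w \<Rightarrow> 'd \<Rightarrow> 'd \<Rightarrow> real)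
    \<Rightarrow> (nat \<Rightarrow> 'w \<Rightarrow> real^'d::finite)
    \<Rightarrow> ((nat \<Rightarrow> 'w \<Rightarrow> real) \<Rightarrow> nat \<Rightarrow> 'w \<Rightarrow> real^'d) set" where
  "Phi_ag F T ex xi = {Y.
     (\<forall>chi\<in>mixed_stopping_times F T. trading_strategy F T (Y chi)) \<and>
     (\<forall>chi\<in>mixed_stopping_times F T. \<forall>t\<le>T.
        inK ex t (\<lambda>\<omega>. Y chi t \<omega> - chi t \<omega> *\<^sub>R xi t \<omega> - Y chi (Suc t) \<omega>)) \<and>
     (\<forall>chi\<in>mixed_stopping_times F T. \<forall>chi'\<in>mixed_stopping_times F T. \<forall>t\<le>T+1. \<forall>\<omega>.
        (\<forall>s<t. chi s \<omega> = chi' s \<omega>) \<longrightarrow> Y chi t \<omega> = Y chi' t \<omega>)}"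

definition initial_value :: "(nat \<Rightarrow> 'w set set) \<Rightarrow> nat
    \<Rightarrow> ((nat \<Rightarrow> 'w \<Rightarrow> real) \<Rightarrow> nat \<Rightarrow> 'w \<Rightarrow> 'v) \<Rightarrow> 'v \<Rightarrow> bool" where
  "initial_value F T Y x \<longleftrightarrow> (\<forall>chi\<in>mixed_stopping_times F T. \<forall>\<omega>. Y chi 0 \<omega> = x)"

definition ask_price :: "(nat \<Rightarrow> 'w set set) \<Rightarrow> nat \<Rightarrow> (nat \<Rightarrow> 'w \<Rightarrow> 'd \<Rightarrow> 'd \<Rightarrow> real)
    \<Rightarrow> (nat \<Rightarrow> 'w \<Rightarrow> real^'d::finite) \<Rightarrow> 'd \<Rightarrow> real" where
  "ask_price F T ex xi j =
     Inf {x. \<exists>Y\<in>Phi_ag F T ex xi. initial_value F T Y (x *\<^sub>R axis j 1)}"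

definition no_arbitrage :: "(nat \<Rightarrow> 'w set set) \<Rightarrow> nat \<Rightarrow> (nat \<Rightarrow> 'w \<Rightarrow> 'd::finite \<Rightarrow> 'd \<Rightarrow> real) \<Rightarrow> bool" where
  "no_arbitrage F T ex \<longleftrightarrow> \<not> (\<exists>(y :: nat \<Rightarrow> 'w \<Rightarrow> real^'d) x.
     trading_strategy F T y \<and> (\<forall>\<omega>. y 0 \<omega> = 0) \<and>
     (\<forall>t<T. inK ex t (\<lambda>\<omega>. y t \<omega> - y (Suc t) \<omega>)) \<and>
     meas (F T) x \<and> inK ex T (\<lambda>\<omega>. y T \<omega> - x \<omega>) \<and>
     (\<forall>\<omega> i. 0 \<le> x \<omega> $ i) \<and> x \<noteq> (\<lambda>_. 0))"

end

theory Submission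
  imports Defs
begin

lemma polyhedron_affine_preimage:
  fixes L :: "'a::euclidean_space \<Rightarrow> 'b::euclidean_space"
  assumes "linear L" "polyhedron P"
  shows "polyhedron {x. L x + c \<in> P}"
proof -
  obtain F where F: "finite F" "P = \<Inter>F" "\<forall>h\<in>F. \<exists>a b. a \<noteq> 0 \<and> h = {x. a \<bullet> x \<le> b}"
    using assms(2) unfolding polyhedron_def by (elim exE conjE) (rule that)
  have eq: "{x. L x + c \<in> P} = \<Inter> ((\<lambda>h. {x. L x + c \<in> h}) ` F)"
    unfolding F(2) by (simp add: set_eq_iff)
  have "polyhedron {x. L x + c \<in> h}" if hF: "h \<in> F" for h
  proof -
    have "\<exists>a b. h = {x. a \<bullet> x \<le> b}" using F(3) hF by fast
    then obtain a b where h: "h = {x. a \<bullet> x \<le> b}" by (elim exE) (rule that)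
    have adj: "adjoint L a \<bullet> x = a \<bullet> L x" for x
      using adjoint_works[OF assms(1), of x a] by (simp add: inner_commute)
    have "{x. L x + c \<in> h} = {x. adjoint L a \<bullet> x \<le> b - a \<bullet> c}"
      unfolding h by (simp add: inner_add_right adj set_eq_iff algebra_simps)
    thus ?thesis by (simp add: polyhedron_halfspace_le)
  qed
  thus ?thesis unfolding eq using F(1) by (intro polyhedron_Inter) auto
qed

lemma norm_le1_cbox:
  fixes x :: "'a::euclidean_space"
  assumes "norm x \<le> 1" shows "x \<in> cbox (-One) One"
  unfolding mem_box
proof
  fix i :: 'a assume i: "i \<in> Basis"
  have "\<bar>x \<bullet> i\<bar> \<le> 1" using Basis_le_norm[OF i, of x] assms by linarith
  hence "- 1 \<le> x \<bullet> i \<and> x \<bullet> i \<le> 1" by (simp add: abs_le_iff)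
  thus "- One \<bullet> i \<le> x \<bullet> i \<and> x \<bullet> i \<le> One \<bullet> i" using i by (simp add: inner_minus_left)
qed

lemma inner_pair_real: "(u, v::real) \<bullet> z = u \<bullet> fst z + v * snd z"
  by (cases z) simp

lemma polyhedron_homog:
  fixes P :: "'a::euclidean_space set"
  assumes "polyhedron P"
  obtains W :: "('a \<times> real) set" where "finite W" "\<And>x. x \<in> P \<longleftrightarrow> (x,1) \<in> convex_cone hull W"
proof -
  obtain F where F: "finite F" "P = \<Inter>F" "\<forall>h\<in>F. \<exists>a b. a \<noteq> 0 \<and> h = {x. a \<bullet> x \<le> b}"
    using assms unfolding polyhedron_def by (elim exE conjE) (rule that)
  have ab1: "\<forall>h\<in>F. \<exists>ab. h = {x. fst ab \<bullet> x \<le> snd ab}"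
  proof
    fix h assume hF: "h \<in> F"
    have "\<exists>a b. h = {x. a \<bullet> x \<le> b}" using F(3) hF by fast
    then obtain a b where "h = {x. a \<bullet> x \<le> b}" by (elim exE) (rule that)
    thus "\<exists>ab. h = {x. fst ab \<bullet> x \<le> snd ab}" by (intro exI[of _ "(a,b)"]) simp
  qed
  obtain ab where ab0: "\<forall>h\<in>F. h = {x. fst (ab h) \<bullet> x \<le> snd (ab h)}"
    using bchoice[OF ab1] by (elim exE) (rule that)
  define a where "a h = fst (ab h)" for h
  define b where "b h = snd (ab h)" for h
  have ab: "x \<in> h \<longleftrightarrow> a h \<bullet> x \<le> b h" if "h \<in> F" for h x
  proof -
    have e: "h = {x. fst (ab h) \<bullet> x \<le> snd (ab h)}" by (rule bspec[OF ab0 that])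
    have "x \<in> h \<longleftrightarrow> x \<in> {x. fst (ab h) \<bullet> x \<le> snd (ab h)}" by (simp only: e[symmetric])
    thus ?thesis unfolding a_def b_def by simp
  qed
  define C :: "('a \<times> real) set" where
    "C = {z. (0,-1) \<bullet> z \<le> (0::real) \<and> (\<forall>h\<in>F. (a h, - b h) \<bullet> z \<le> 0)}"
  have Ceq: "C = \<Inter> (insert {z. (0,-1) \<bullet> z \<le> (0::real)} ((\<lambda>h. {z. (a h, - b h) \<bullet> z \<le> 0}) ` F))"
    unfolding C_def by (simp add: set_eq_iff)
  have polyC: "polyhedron C" unfolding Ceq using F(1)
    by (intro polyhedron_Inter) (auto simp: polyhedron_halfspace_le)
  have ccC: "convex_cone C" unfolding Ceq
    by (intro convex_cone_Inter) (auto simp: convex_cone_halfspace_le)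
  define B where "B = C \<inter> cbox (-One) One"
  have "polyhedron B" unfolding B_def using polyC by auto
  moreover have "bounded B" unfolding B_def by (meson bounded_cbox bounded_subset inf_le2)
  ultimately have "polytope B" by (simp add: polytope_eq_bounded_polyhedron)
  then obtain W where W: "finite W" "B = convex hull W" unfolding polytope_def by (elim exE conjE) (rule that)
  have CW: "C = convex_cone hull W"
  proof
    show "convex_cone hull W \<subseteq> C"
    proof (rule hull_minimal)
      have "W \<subseteq> B" unfolding W(2) by (rule hull_subset)
      thus "W \<subseteq> C" unfolding B_def by simp
    qed (rule ccC)
    show "C \<subseteq> convex_cone hull W"
    proof
      fix z assume z: "z \<in> C"
      show "z \<in> convex_cone hull W"
      proof (cases "z = 0")
        case True thus ?thesis by (simp add: convex_cone_hull_contains_0)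
      next
        case False
        define e where "e = 1 / norm z"
        have e: "e > 0" using False by (simp add: e_def)
        have "e *\<^sub>R z \<in> C" using ccC z e by (simp add: convex_cone_iff)
        moreover have "norm (e *\<^sub>R z) \<le> 1" using False by (simp add: e_def)
        ultimately have "e *\<^sub>R z \<in> B" unfolding B_def using norm_le1_cbox by blast
        hence ez: "e *\<^sub>R z \<in> convex_cone hull W" unfolding W(2) using convex_hull_subset_convex_cone_hull by (rule subsetD[rotated])
        have "(1/e) *\<^sub>R (e *\<^sub>R z) \<in> convex_cone hull W" using convex_cone_hull_mul[OF ez, of "1/e"] e by simp
        thus ?thesis using e by simp
      qed
    qed
  qed
  have Piff: "x \<in> P \<longleftrightarrow> (x,1) \<in> C" for x
  proof -
    have "x \<in> P \<longleftrightarrow> (\<forall>h\<in>F. a h \<bullet> x \<le> b h)" unfolding F(2) by (simp add: ab)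
    also have "\<dots> \<longleftrightarrow> (x,1) \<in> C" unfolding C_def by (simp add: inner_pair_real)
    finally show ?thesis .
  qed
  have Piff2: "\<And>x. x \<in> P \<longleftrightarrow> (x,1) \<in> convex_cone hull W" using Piff by (simp only: CW)
  show ?thesis
    apply (rule that)
     apply (rule W(1))
    apply (rule Piff2)
    done
qed

lemma polyhedron_sums:
  fixes S T :: "'a::euclidean_space set"
  assumes "polyhedron S" "polyhedron T"
  shows "polyhedron {x + y | x y. x \<in> S \<and> y \<in> T}"
proof -
  obtain W1 where W1: "finite W1" "\<And>x. x \<in> S \<longleftrightarrow> (x,1::real) \<in> convex_cone hull W1" 
    apply (rule polyhedron_homog[OF assms(1)])
    apply (erule that)
    apply assumption
    done
  obtain W2 where W2: "finite W2" "\<And>x. x \<in> T \<longleftrightarrow> (x,1::real) \<in> convex_cone hull W2" 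
    apply (rule polyhedron_homog[OF assms(2)])
    apply (erule that)
    apply assumption
    done
  define f1 :: "'a \<times> real \<Rightarrow> 'a \<times> real \<times> real" where "f1 = (\<lambda>w. (fst w, snd w, 0))"
  define f2 :: "'a \<times> real \<Rightarrow> 'a \<times> real \<times> real" where "f2 = (\<lambda>w. (fst w, 0, snd w))"
  have l1: "linear f1" unfolding f1_def by (intro linearI) (auto simp: algebra_simps)
  have l2: "linear f2" unfolding f2_def by (intro linearI) (auto simp: algebra_simps)
  define C where "C = convex_cone hull (f1 ` W1 \<union> f2 ` W2)"
  have polyC: "polyhedron C" unfolding C_def using W1(1) W2(1) by (intro polyhedron_convex_cone_hull) auto
  have Ceq: "C = (\<Union>u\<in>f1 ` (convex_cone hull W1). \<Union>v\<in>f2 ` (convex_cone hull W2). {u + v})"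
    unfolding C_def convex_cone_hull_Un convex_cone_hull_linear_image[OF l1] convex_cone_hull_linear_image[OF l2] ..
  have lin: "linear (\<lambda>x::'a. (x, 0::real, 0::real))" by (intro linearI) auto
  have "{x + y | x y. x \<in> S \<and> y \<in> T} = {x. (\<lambda>x. (x, 0::real, 0::real)) x + (0,1,1) \<in> C}"
  proof (intro set_eqI iffI)
    fix z assume "z \<in> {x + y | x y. x \<in> S \<and> y \<in> T}"
    then obtain x y where xy: "z = x + y" "x \<in> S" "y \<in> T" by blast
    have h1: "(x,1) \<in> convex_cone hull W1" using W1(2)[THEN iffD1, OF xy(2)] .
    have h2: "(y,1) \<in> convex_cone hull W2" using W2(2)[THEN iffD1, OF xy(3)] .
    have "f1 (x,1) + f2 (y,1) \<in> C" unfolding Ceq using h1 h2 by blast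
    thus "z \<in> {x. (\<lambda>x. (x, 0::real, 0::real)) x + (0,1,1) \<in> C}" using xy by (simp add: f1_def f2_def)
  next
    fix z assume "z \<in> {x. (\<lambda>x. (x, 0::real, 0::real)) x + (0,1,1) \<in> C}"
    hence "(z,1,1) \<in> C" by simp
    then obtain u v where uv: "u \<in> convex_cone hull W1" "v \<in> convex_cone hull W2" "(z,1,1) = f1 u + f2 v"
      unfolding Ceq by blast
    hence e: "snd u = 1" "snd v = 1" "z = fst u + fst v" by (auto simp: f1_def f2_def)
    have u1: "(fst u, 1) = u" "(fst v, 1) = v" using e by (simp_all add: prod_eq_iff)
    have "(fst u, 1) \<in> convex_cone hull W1" unfolding u1 by (rule uv(1))
    hence "fst u \<in> S" by (rule W1(2)[THEN iffD2])
    have "(fst v, 1) \<in> convex_cone hull W2" unfolding u1 by (rule uv(2))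
    hence "fst v \<in> T" by (rule W2(2)[THEN iffD2])
    note this \<open>fst u \<in> S\<close>
    thus "z \<in> {x + y | x y. x \<in> S \<and> y \<in> T}" using e by blast
  qed
  thus ?thesis using polyhedron_affine_preimage[OF lin polyC, of "(0,1,1)"] by simp
qed

lemma polyhedron_translate:
  fixes S :: "'a::euclidean_space set"
  assumes "polyhedron S" shows "polyhedron {a + x | x. x \<in> S}"
proof -
  have "{a + x | x. x \<in> S} = {x. id x + (-a) \<in> S}"
  proof (intro set_eqI iffI)
    fix z assume "z \<in> {a + x | x. x \<in> S}"
    then obtain x where "z = a + x" "x \<in> S" by blast
    thus "z \<in> {x. id x + (-a) \<in> S}" by simp
  next
    fix z assume "z \<in> {x. id x + (-a) \<in> S}"
    hence "z - a \<in> S" by simp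
    moreover have "z = a + (z - a)" by simp
    ultimately show "z \<in> {a + x | x. x \<in> S}" by blast
  qed
  thus ?thesis using polyhedron_affine_preimage[OF linear_id assms, of "-a"] by simp
qed

locale setting =
  fixes F :: "nat \<Rightarrow> ('w::finite) set set" and T :: nat
    and ex :: "nat \<Rightarrow> 'w \<Rightarrow> 'd::finite \<Rightarrow> 'd \<Rightarrow> real" and xi :: "nat \<Rightarrow> 'w \<Rightarrow> real^'d"
  assumes partition: "\<And>t. t \<le> T \<Longrightarrow> partition_on UNIV (F t)"
    and refines: "\<And>t \<nu>. t < T \<Longrightarrow> \<nu> \<in> F (Suc t) \<Longrightarrow> \<exists>\<mu>\<in>F t. \<nu> \<subseteq> \<mu>"
    and F0: "F 0 = {UNIV}"
    and FT: "F T = (\<lambda>\<omega>. {\<omega>}) ` UNIV"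
    and pi_meas: "\<And>t j k. t \<le> T \<Longrightarrow> meas (F t) (\<lambda>\<omega>. ex t \<omega> j k)"
    and xi_adapted: "\<And>t. t \<le> T \<Longrightarrow> meas (F t) (xi t)"
    and NA: "no_arbitrage F T ex"
begin

definition atom where "atom t \<omega> = (THE \<mu>. \<mu> \<in> F t \<and> \<omega> \<in> \<mu>)"

lemma atom_ex1: "t \<le> T \<Longrightarrow> \<exists>!\<mu>. \<mu> \<in> F t \<and> \<omega> \<in> \<mu>"
proof -
  assume "t \<le> T"
  hence p: "partition_on UNIV (F t)" by (rule partition)
  obtain \<mu> where "\<mu> \<in> F t" "\<omega> \<in> \<mu>" using partition_onD1[OF p] by blast
  moreover have "\<mu>' = \<mu>" if "\<mu>' \<in> F t" "\<omega> \<in> \<mu>'" for \<mu>'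
    using partition_onD2[OF p] that \<open>\<mu> \<in> F t\<close> \<open>\<omega> \<in> \<mu>\<close>
    unfolding disjoint_def by blast
  ultimately show ?thesis by blast
qed

lemma atom: "t \<le> T \<Longrightarrow> atom t \<omega> \<in> F t" "t \<le> T \<Longrightarrow> \<omega> \<in> atom t \<omega>"
  unfolding atom_def using theI'[OF atom_ex1] by blast+

lemma atom_unique: "t \<le> T \<Longrightarrow> \<mu> \<in> F t \<Longrightarrow> \<omega> \<in> \<mu> \<Longrightarrow> atom t \<omega> = \<mu>"
  unfolding atom_def by (rule the1_equality[OF atom_ex1]) auto

lemma atom_sym: assumes "t \<le> T" "\<omega>' \<in> atom t \<omega>" shows "atom t \<omega>' = atom t \<omega>"
  using atom_unique[OF assms(1) atom(1)[OF assms(1)] assms(2)] .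

lemma meas_atom: assumes "t \<le> T" "meas (F t) x" "\<omega>' \<in> atom t \<omega>" shows "x \<omega>' = x \<omega>"
proof -
  have "atom t \<omega> \<in> F t" "\<omega> \<in> atom t \<omega>" using atom assms(1) by auto
  thus ?thesis using assms(2,3) unfolding meas_def by blast
qed

lemma measI: assumes "t \<le> T" "\<And>\<omega> \<omega>'. \<omega>' \<in> atom t \<omega> \<Longrightarrow> x \<omega>' = x \<omega>" shows "meas (F t) x"
  unfolding meas_def
proof (intro ballI)
  fix \<mu> \<omega> \<omega>' assume a: "\<mu> \<in> F t" "\<omega> \<in> \<mu>" "\<omega>' \<in> \<mu>"
  have "atom t \<omega> = \<mu>" by (rule atom_unique[OF assms(1) a(1,2)])
  hence "\<omega>' \<in> atom t \<omega>" using a(3) by simp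
  thus "x \<omega> = x \<omega>'" by (rule sym[OF assms(2)])
qed

lemma atom_mono_aux: "s + d \<le> T \<Longrightarrow> atom (s + d) \<omega> \<subseteq> atom s \<omega>"
proof (induction d)
  case (Suc d)
  have lt: "s + d < T" using Suc by auto
  have "atom (Suc (s + d)) \<omega> \<in> F (Suc (s + d))" using atom(1) Suc.prems by simp
  then obtain \<mu> where mu: "\<mu> \<in> F (s + d)" "atom (Suc (s + d)) \<omega> \<subseteq> \<mu>"
    using refines[OF lt] by blast
  have "\<omega> \<in> \<mu>" using mu(2) atom(2)[of "Suc (s+d)" \<omega>] Suc.prems by auto
  hence "atom (s+d) \<omega> = \<mu>" using atom_unique[OF _ mu(1)] lt by simp
  thus ?case using Suc mu(2) by auto
qed simp

lemma atom_mono: "s \<le> t \<Longrightarrow> t \<le> T \<Longrightarrow> atom t \<omega> \<subseteq> atom s \<omega>"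
  using atom_mono_aux[of s "t - s" \<omega>] by simp

lemma atom_eq: assumes "s \<le> t" "t \<le> T" "\<omega>' \<in> atom t \<omega>" shows "atom s \<omega>' = atom s \<omega>"
proof -
  have "\<omega>' \<in> atom s \<omega>" using atom_mono[OF assms(1,2)] assms(3) by auto
  thus ?thesis using atom_sym assms by simp
qed

lemma meas_mono: assumes "s \<le> t" "t \<le> T" "meas (F s) x" shows "meas (F t) x"
proof (rule measI[OF assms(2)])
  fix \<omega> \<omega>' assume "\<omega>' \<in> atom t \<omega>"
  hence "\<omega>' \<in> atom s \<omega>" using atom_mono[OF assms(1,2)] by auto
  moreover have "s \<le> T" using assms by simp
  ultimately show "x \<omega>' = x \<omega>" using meas_atom[OF _ assms(3)] by blast
qed

lemma atom_T: "atom T \<omega> = {\<omega>}"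
  using atom_unique[of T "{\<omega>}" \<omega>] FT by auto

lemma atom_0: "atom 0 \<omega> = UNIV"
  using atom_unique[of 0 UNIV \<omega>] F0 by auto

lemma meas_T: "meas (F T) x"
  by (rule measI) (auto simp: atom_T)

lemma meas_const: "meas P (\<lambda>_. c)" by (simp add: meas_def)
lemma meas_comp2: assumes "meas P x" "meas P y" shows "meas P (\<lambda>\<omega>. f (x \<omega>) (y \<omega>))"
  unfolding meas_def
proof (intro ballI)
  fix \<mu> \<omega> \<omega>' assume a: "\<mu>\<in>P" "\<omega>\<in>\<mu>" "\<omega>'\<in>\<mu>"
  have "x \<omega> = x \<omega>'" "y \<omega> = y \<omega>'" using assms a unfolding meas_def by blast+
  thus "f (x \<omega>) (y \<omega>) = f (x \<omega>') (y \<omega>')" by simp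
qed
lemma meas_comp: assumes "meas P x" shows "meas P (\<lambda>\<omega>. f (x \<omega>))"
  using meas_comp2[OF assms assms, of "\<lambda>a b. f a"] by simp

lemma meas_ind: assumes "t \<le> T" shows "meas (F t) (\<lambda>\<omega>'. \<omega>' \<in> atom t \<omega>)"
proof (rule measI[OF assms])
  fix a b assume "b \<in> atom t a"
  hence "atom t b = atom t a" using atom_sym assms by simp
  thus "(b \<in> atom t \<omega>) = (a \<in> atom t \<omega>)" using atom_sym[OF assms] atom(2)[OF assms] by metis
qed

lemma Kcc: "convex_cone (Kcone ex t \<omega>)"
  unfolding Kcone_def by (rule convex_cone_convex_cone_hull)
lemma K0: "0 \<in> Kcone ex t \<omega>" using Kcc convex_cone_contains_0 by blast
lemma K_add: "x \<in> Kcone ex t \<omega> \<Longrightarrow> y \<in> Kcone ex t \<omega> \<Longrightarrow> x + y \<in> Kcone ex t \<omega>"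
  using Kcc convex_cone_add by blast
lemma K_mul: "x \<in> Kcone ex t \<omega> \<Longrightarrow> 0 \<le> c \<Longrightarrow> c *\<^sub>R x \<in> Kcone ex t \<omega>"
  using Kcc by (simp add: convex_cone_iff)
lemma K_sum: "finite A \<Longrightarrow> (\<And>a. a \<in> A \<Longrightarrow> f a \<in> Kcone ex t \<omega>) \<Longrightarrow> sum f A \<in> Kcone ex t \<omega>"
  by (induction A rule: finite_induct) (auto intro: K0 K_add)

lemma Kcone_atom: "t \<le> T \<Longrightarrow> \<omega>' \<in> atom t \<omega> \<Longrightarrow> Kcone ex t \<omega>' = Kcone ex t \<omega>"
proof -
  assume a: "t \<le> T" "\<omega>' \<in> atom t \<omega>"
  have "ex t \<omega>' = ex t \<omega>"
    using meas_atom[OF a(1) pi_meas[OF a(1)] a(2)] by (intro ext) auto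
  thus ?thesis by (simp add: Kcone_def)
qed

lemma Kcone_poly: "polyhedron (Kcone ex t \<omega>)"
proof -
  have "finite (range (\<lambda>j::'d. axis j (1::real)) \<union> {ex t \<omega> j k *\<^sub>R axis j 1 - axis k 1 | j k. True})"
  proof -
    have "{ex t \<omega> j k *\<^sub>R axis j 1 - axis k 1 | j k. True} = (\<lambda>(j,k). ex t \<omega> j k *\<^sub>R axis j (1::real) - axis k 1) ` UNIV"
      by auto
    thus ?thesis by simp
  qed
  thus ?thesis unfolding Kcone_def by (rule polyhedron_convex_cone_hull)
qed

lemma inK_add: "inK ex t x \<Longrightarrow> inK ex t y \<Longrightarrow> inK ex t (\<lambda>\<omega>. x \<omega> + y \<omega>)"
  by (simp add: inK_def K_add)
lemma inK_0: "inK ex t (\<lambda>_. 0)" by (simp add: inK_def K0)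
lemma inK_mul: "inK ex t x \<Longrightarrow> (\<And>\<omega>. 0 \<le> c \<omega>) \<Longrightarrow> inK ex t (\<lambda>\<omega>. c \<omega> *\<^sub>R x \<omega>)"
  by (simp add: inK_def K_mul)

definition qchain where
  "qchain t z y \<longleftrightarrow> (\<forall>s\<in>{t+1..T+1}. meas (F (s - 1)) (y s)) \<and> y (T+1) = (\<lambda>_. 0) \<and>
        inK ex t (\<lambda>\<omega>. z \<omega> - y (t+1) \<omega>) \<and>
        (\<forall>s\<in>{t+1..T}. inK ex s (\<lambda>\<omega>. y s \<omega> - y (Suc s) \<omega>))"

lemma Qset_iff: "z \<in> Qset F T ex t \<longleftrightarrow> meas (F t) z \<and> (\<exists>y. qchain t z y)"
  by (simp add: Qset_def qchain_def)

lemma Qnode_iff: "v \<in> Qnode F T ex t \<mu> \<longleftrightarrow> (\<exists>z \<omega>. z \<in> Qset F T ex t \<and> \<omega> \<in> \<mu> \<and> v = z \<omega>)"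
  by (auto simp: Qnode_def)

lemma zero_Q: "(\<lambda>_. 0) \<in> Qset F T ex t"
  unfolding Qset_iff qchain_def
  by (intro conjI exI[of _ "\<lambda>_ _. 0"]) (auto simp: meas_const inK_0)

lemma K_sub_Q: assumes "t \<le> T" "v \<in> Kcone ex t \<omega>" shows "v \<in> Qnode F T ex t (atom t \<omega>)"
proof -
  define z where "z = (\<lambda>\<omega>'. if \<omega>' \<in> atom t \<omega> then v else 0)"
  have "meas (F t) z" unfolding z_def using meas_ind[OF assms(1)] by (rule meas_comp)
  moreover have "qchain t z (\<lambda>_ _. 0)"
    unfolding qchain_def z_def using assms Kcone_atom
    by (auto simp: meas_const inK_0 inK_def K0)
  ultimately have "z \<in> Qset F T ex t" by (auto simp: Qset_iff)
  moreover have wa: "\<omega> \<in> atom t \<omega>" by (rule atom(2)[OF assms(1)])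
  moreover have "v = z \<omega>" using wa by (simp add: z_def)
  ultimately show ?thesis unfolding Qnode_iff by blast
qed

lemma glue:
  assumes t: "t \<le> T" and g: "meas (F t) g" and gq: "\<And>\<omega>. g \<omega> \<in> Qnode F T ex t (atom t \<omega>)"
  shows "g \<in> Qset F T ex t"
proof -
  have "\<forall>\<omega>. \<exists>zy. meas (F t) (fst zy) \<and> qchain t (fst zy) (snd zy) \<and> fst zy \<omega> = g \<omega>"
  proof
    fix \<omega>
    obtain z \<omega>' where z: "z \<in> Qset F T ex t" "\<omega>' \<in> atom t \<omega>" "g \<omega> = z \<omega>'" using gq Qnode_iff by blast
    then obtain y where "meas (F t) z" "qchain t z y" by (auto simp: Qset_iff)
    moreover have "z \<omega> = g \<omega>" using meas_atom[OF t \<open>meas (F t) z\<close> z(2)] z(3) by simp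
    ultimately show "\<exists>zy. meas (F t) (fst zy) \<and> qchain t (fst zy) (snd zy) \<and> fst zy \<omega> = g \<omega>"
      by (intro exI[of _ "(z,y)"]) auto
  qed
  then obtain ZY where ZY: "\<And>\<omega>. meas (F t) (fst (ZY \<omega>)) \<and> qchain t (fst (ZY \<omega>)) (snd (ZY \<omega>)) \<and> fst (ZY \<omega>) \<omega> = g \<omega>"
    by metis
  define r where "r \<omega> = (SOME \<omega>'. \<omega>' \<in> atom t \<omega>)" for \<omega>
  have r_in: "r \<omega> \<in> atom t \<omega>" for \<omega> unfolding r_def using atom(2)[OF t] by (rule someI)
  have r_eq: "r \<omega>' = r \<omega>" if "atom t \<omega>' = atom t \<omega>" for \<omega> \<omega>' unfolding r_def by (simp only: that)
  define Y where "Y s \<omega> = snd (ZY (r \<omega>)) s \<omega>" for s \<omega>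
  have Zr: "fst (ZY (r \<omega>)) \<omega> = g \<omega>" for \<omega>
  proof -
    have m: "meas (F t) (fst (ZY (r \<omega>)))" using ZY by blast
    have "fst (ZY (r \<omega>)) \<omega> = fst (ZY (r \<omega>)) (r \<omega>)"
      using meas_atom[OF t m r_in] by (rule sym)
    also have "\<dots> = g (r \<omega>)" using ZY by blast
    also have "\<dots> = g \<omega>" using meas_atom[OF t g r_in] .
    finally show ?thesis .
  qed
  have "qchain t g Y"
    unfolding qchain_def
  proof (intro conjI ballI)
    fix s assume s: "s \<in> {t+1..T+1}"
    show "meas (F (s - 1)) (Y s)"
    proof (rule measI)
      show "s - 1 \<le> T" using s by auto
      fix \<omega> \<omega>' assume w: "\<omega>' \<in> atom (s - 1) \<omega>"
      have "atom t \<omega>' = atom t \<omega>" using atom_eq[OF _ _ w] s by auto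
      hence "r \<omega>' = r \<omega>" by (rule r_eq)
      moreover have "meas (F (s-1)) (snd (ZY (r \<omega>)) s)" using ZY s unfolding qchain_def by blast
      ultimately show "Y s \<omega>' = Y s \<omega>" unfolding Y_def using meas_atom w s
        by (metis \<open>s - 1 \<le> T\<close>)
    qed
  next
    show "Y (T+1) = (\<lambda>_. 0)" unfolding Y_def using ZY unfolding qchain_def by auto
  next
    show "inK ex t (\<lambda>\<omega>. g \<omega> - Y (t+1) \<omega>)" unfolding inK_def
    proof
      fix \<omega>
      have "inK ex t (\<lambda>\<omega>'. fst (ZY (r \<omega>)) \<omega>' - snd (ZY (r \<omega>)) (t+1) \<omega>')" using ZY unfolding qchain_def by blast
      thus "g \<omega> - Y (t+1) \<omega> \<in> Kcone ex t \<omega>" unfolding inK_def Y_def using Zr by metis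
    qed
  next
    fix s assume s: "s \<in> {t+1..T}"
    show "inK ex s (\<lambda>\<omega>. Y s \<omega> - Y (Suc s) \<omega>)" unfolding inK_def
    proof
      fix \<omega>
      have "inK ex s (\<lambda>\<omega>'. snd (ZY (r \<omega>)) s \<omega>' - snd (ZY (r \<omega>)) (Suc s) \<omega>')" using ZY s unfolding qchain_def by blast
      thus "Y s \<omega> - Y (Suc s) \<omega> \<in> Kcone ex s \<omega>" unfolding inK_def Y_def by metis
    qed
  qed
  thus ?thesis using g by (auto simp: Qset_iff)
qed

lemma prepend:
  assumes t: "t < T" and z: "meas (F t) z" and y1: "meas (F t) y1" "y1 \<in> Qset F T ex (Suc t)"
    and k: "inK ex t (\<lambda>\<omega>. z \<omega> - y1 \<omega>)"
  shows "z \<in> Qset F T ex t"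
proof -
  obtain y where y: "qchain (Suc t) y1 y" using y1 by (auto simp: Qset_iff)
  define y' where "y' s = (if s = Suc t then y1 else y s)" for s
  have "qchain t z y'"
    unfolding qchain_def
  proof (intro conjI ballI)
    fix s assume s: "s \<in> {t+1..T+1}"
    show "meas (F (s - 1)) (y' s)"
    proof (cases "s = Suc t")
      case True thus ?thesis using y1 by (simp add: y'_def)
    next
      case False thus ?thesis using y s unfolding qchain_def y'_def by auto
    qed
  next
    show "y' (T+1) = (\<lambda>_. 0)" using y t unfolding qchain_def y'_def by auto
  next
    show "inK ex t (\<lambda>\<omega>. z \<omega> - y' (t+1) \<omega>)" using k by (simp add: y'_def)
  next
    fix s assume s: "s \<in> {t+1..T}"
    show "inK ex s (\<lambda>\<omega>. y' s \<omega> - y' (Suc s) \<omega>)"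
    proof (cases "s = Suc t")
      case True thus ?thesis using y unfolding qchain_def y'_def by auto
    next
      case False thus ?thesis using y s unfolding qchain_def y'_def by auto
    qed
  qed
  thus ?thesis using z by (auto simp: Qset_iff)
qed

end

context setting begin

lemma atom_nonempty_mem: assumes "t \<le> T" "\<mu> \<in> F t" shows "\<exists>\<omega>. \<omega> \<in> \<mu>"
proof -
  have "\<mu> \<noteq> {}" using partition_onD3[OF partition[OF assms(1)]] assms(2) by auto
  thus ?thesis by auto
qed

lemma finite_sets: "finite (A :: 'w set set)" by simp

lemma Q_T: "Qnode F T ex T {\<omega>} = Kcone ex T \<omega>"
proof
  show "Qnode F T ex T {\<omega>} \<subseteq> Kcone ex T \<omega>"
  proof
    fix v assume "v \<in> Qnode F T ex T {\<omega>}"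
    then obtain z where z: "z \<in> Qset F T ex T" "v = z \<omega>" unfolding Qnode_iff by blast
    then obtain y where y: "qchain T z y" by (auto simp: Qset_iff)
    hence "inK ex T (\<lambda>\<omega>. z \<omega> - y (T+1) \<omega>)" "y (T+1) = (\<lambda>_. 0)" unfolding qchain_def by auto
    thus "v \<in> Kcone ex T \<omega>" using z(2) unfolding inK_def by force
  qed
  show "Kcone ex T \<omega> \<subseteq> Qnode F T ex T {\<omega>}"
    using K_sub_Q[of T _ \<omega>] by (simp add: atom_T subset_iff)
qed

lemma Q_rec:
  assumes t: "t < T" and mu: "\<mu> \<in> F t" and w0: "\<omega>0 \<in> \<mu>"
  shows "Qnode F T ex t \<mu> = {k + q | k q. k \<in> Kcone ex t \<omega>0 \<and> q \<in> (\<Inter>\<nu>\<in>succ F t \<mu>. Qnode F T ex (Suc t) \<nu>)}"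
proof -
  have tT: "t \<le> T" "Suc t \<le> T" using t by auto
  have amu: "atom t \<omega>0 = \<mu>" using atom_unique[OF tT(1) mu w0] .
  show ?thesis
  proof (intro set_eqI iffI)
    fix v assume "v \<in> Qnode F T ex t \<mu>"
    then obtain z \<omega> where z: "z \<in> Qset F T ex t" "\<omega> \<in> \<mu>" "v = z \<omega>" unfolding Qnode_iff by blast
    then obtain y where y: "qchain t z y" "meas (F t) z" by (auto simp: Qset_iff)
    have aw: "atom t \<omega> = \<mu>" using atom_unique[OF tT(1) mu z(2)] .
    have k: "z \<omega> - y (t+1) \<omega> \<in> Kcone ex t \<omega>0"
    proof -
      have "z \<omega> - y (t+1) \<omega> \<in> Kcone ex t \<omega>" using y(1) unfolding qchain_def inK_def by blast
      moreover have "Kcone ex t \<omega> = Kcone ex t \<omega>0" using Kcone_atom[OF tT(1)] z(2) amu by simp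
      ultimately show ?thesis by simp
    qed
    have my1: "meas (F t) (y (t+1))"
    proof -
      have "Suc t \<in> {t+1..T+1}" using t by simp
      hence "meas (F (Suc t - 1)) (y (Suc t))" using y(1) unfolding qchain_def by blast
      thus ?thesis by simp
    qed
    have yQ: "y (t+1) \<in> Qset F T ex (Suc t)"
    proof -
      have "meas (F (Suc t)) (y (t+1))" using meas_mono[OF _ tT(2) my1] by simp
      moreover have "qchain (Suc t) (y (t+1)) y" using y(1) t unfolding qchain_def by auto
      ultimately show ?thesis by (auto simp: Qset_iff)
    qed
    have q: "y (t+1) \<omega> \<in> (\<Inter>\<nu>\<in>succ F t \<mu>. Qnode F T ex (Suc t) \<nu>)"
    proof
      fix \<nu> assume nu: "\<nu> \<in> succ F t \<mu>"
      hence nu': "\<nu> \<in> F (Suc t)" "\<nu> \<subseteq> \<mu>" by (auto simp: succ_def)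
      obtain \<omega>' where w': "\<omega>' \<in> \<nu>" using atom_nonempty_mem[OF tT(2) nu'(1)] by blast
      have "\<omega>' \<in> atom t \<omega>" using w' nu'(2) aw by auto
      hence "y (t+1) \<omega>' = y (t+1) \<omega>" using meas_atom[OF tT(1) my1] by simp
      thus "y (t+1) \<omega> \<in> Qnode F T ex (Suc t) \<nu>" unfolding Qnode_iff using yQ w' by metis
    qed
    have "v = (z \<omega> - y (t+1) \<omega>) + y (t+1) \<omega>" using z(3) by simp
    thus "v \<in> {k + q | k q. k \<in> Kcone ex t \<omega>0 \<and> q \<in> (\<Inter>\<nu>\<in>succ F t \<mu>. Qnode F T ex (Suc t) \<nu>)}"
      using k q by blast
  next
    fix v assume "v \<in> {k + q | k q. k \<in> Kcone ex t \<omega>0 \<and> q \<in> (\<Inter>\<nu>\<in>succ F t \<mu>. Qnode F T ex (Suc t) \<nu>)}"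
    then obtain k q where kq: "v = k + q" "k \<in> Kcone ex t \<omega>0" "q \<in> (\<Inter>\<nu>\<in>succ F t \<mu>. Qnode F T ex (Suc t) \<nu>)"
      by blast
    define Z where "Z \<omega> = (if \<omega> \<in> atom t \<omega>0 then k + q else 0)" for \<omega>
    define y1 where "y1 \<omega> = (if \<omega> \<in> atom t \<omega>0 then q else 0)" for \<omega>
    have mZ: "meas (F t) Z" unfolding Z_def using meas_ind[OF tT(1)] by (rule meas_comp)
    have my1: "meas (F t) y1" unfolding y1_def using meas_ind[OF tT(1)] by (rule meas_comp)
    have y1Q: "y1 \<in> Qset F T ex (Suc t)"
    proof (rule glue[OF tT(2)])
      show "meas (F (Suc t)) y1" using meas_mono[OF _ tT(2) my1] by simp
      fix \<omega>
      show "y1 \<omega> \<in> Qnode F T ex (Suc t) (atom (Suc t) \<omega>)"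
      proof (cases "\<omega> \<in> atom t \<omega>0")
        case True
        have "atom (Suc t) \<omega> \<subseteq> atom t \<omega>" using atom_mono[OF _ tT(2)] by simp
        also have "atom t \<omega> = \<mu>" using atom_sym[OF tT(1) True] amu by simp
        finally have "atom (Suc t) \<omega> \<in> succ F t \<mu>" using atom(1)[OF tT(2)] by (simp add: succ_def)
        thus ?thesis using kq(3) True by (simp add: y1_def)
      next
        case False
        have "(\<lambda>_. 0) \<in> Qset F T ex (Suc t)" by (rule zero_Q)
        moreover have "\<omega> \<in> atom (Suc t) \<omega>" using atom(2)[OF tT(2)] .
        ultimately have "(0::real^'d) \<in> Qnode F T ex (Suc t) (atom (Suc t) \<omega>)" unfolding Qnode_iff by blast
        thus ?thesis using False by (simp add: y1_def)
      qed
    qed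
    have "inK ex t (\<lambda>\<omega>. Z \<omega> - y1 \<omega>)" unfolding inK_def
    proof
      fix \<omega>
      show "Z \<omega> - y1 \<omega> \<in> Kcone ex t \<omega>"
      proof (cases "\<omega> \<in> atom t \<omega>0")
        case True
        have "Kcone ex t \<omega> = Kcone ex t \<omega>0" using Kcone_atom[OF tT(1) True] .
        thus ?thesis using True kq(2) by (simp add: Z_def y1_def)
      qed (simp add: Z_def y1_def K0)
    qed
    hence "Z \<in> Qset F T ex t" using prepend[OF t mZ my1 y1Q] by simp
    moreover have "Z \<omega>0 = v" using kq(1) atom(2)[OF tT(1)] by (simp add: Z_def)
    ultimately show "v \<in> Qnode F T ex t \<mu>" unfolding Qnode_iff using w0 by metis
  qed
qed

lemma Q_poly_aux: "d \<le> T \<Longrightarrow> \<forall>\<mu>\<in>F (T - d). polyhedron (Qnode F T ex (T - d) \<mu>)"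
proof (induction d)
  case 0
  show ?case
  proof
    fix \<mu> assume "\<mu> \<in> F (T - 0)"
    then obtain \<omega> where "\<mu> = {\<omega>}" using FT by auto
    thus "polyhedron (Qnode F T ex (T - 0) \<mu>)" by (simp add: Q_T Kcone_poly)
  qed
next
  case (Suc d)
  define t where "t = T - Suc d"
  have t: "t < T" "Suc t = T - d" using Suc.prems by (auto simp: t_def)
  have IH: "\<forall>\<nu>\<in>F (Suc t). polyhedron (Qnode F T ex (Suc t) \<nu>)" using Suc t by simp
  show ?case unfolding t_def[symmetric]
  proof
    fix \<mu> assume mu: "\<mu> \<in> F t"
    obtain \<omega>0 where w0: "\<omega>0 \<in> \<mu>" using atom_nonempty_mem[OF _ mu] t by auto
    have "polyhedron (\<Inter>\<nu>\<in>succ F t \<mu>. Qnode F T ex (Suc t) \<nu>)"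
      using IH by (intro polyhedron_Inter) (auto simp: succ_def)
    hence "polyhedron {k + q | k q. k \<in> Kcone ex t \<omega>0 \<and> q \<in> (\<Inter>\<nu>\<in>succ F t \<mu>. Qnode F T ex (Suc t) \<nu>)}"
      by (intro polyhedron_sums Kcone_poly)
    thus "polyhedron (Qnode F T ex t \<mu>)" using Q_rec[OF t(1) mu w0] by simp
  qed
qed

lemma Q_poly: "t \<le> T \<Longrightarrow> \<mu> \<in> F t \<Longrightarrow> polyhedron (Qnode F T ex t \<mu>)"
  using Q_poly_aux[of "T - t"] by simp

lemma Unode_eq: assumes "t \<le> T" "\<mu> \<in> F t" "\<omega>0 \<in> \<mu>"
  shows "Unode F T ex xi t \<mu> = {xi t \<omega>0 + q | q. q \<in> Qnode F T ex t \<mu>}"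
proof -
  have xe: "xi t \<omega> = xi t \<omega>0" if "\<omega> \<in> \<mu>" for \<omega>
  proof -
    have "\<omega> \<in> atom t \<omega>0" using atom_unique[OF assms] that by simp
    thus ?thesis using meas_atom[OF assms(1) xi_adapted[OF assms(1)]] by simp
  qed
  show ?thesis unfolding Unode_def
  proof (intro set_eqI iffI)
    fix x assume "x \<in> {xi t \<omega> + q | \<omega> q. \<omega> \<in> \<mu> \<and> q \<in> Qnode F T ex t \<mu>}"
    then obtain \<omega> q where "x = xi t \<omega> + q" "\<omega> \<in> \<mu>" "q \<in> Qnode F T ex t \<mu>" by blast
    moreover have "xi t \<omega> = xi t \<omega>0" using xe \<open>\<omega> \<in> \<mu>\<close> .
    ultimately show "x \<in> {xi t \<omega>0 + q | q. q \<in> Qnode F T ex t \<mu>}" by simp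
  next
    fix x assume "x \<in> {xi t \<omega>0 + q | q. q \<in> Qnode F T ex t \<mu>}"
    thus "x \<in> {xi t \<omega> + q | \<omega> q. \<omega> \<in> \<mu> \<and> q \<in> Qnode F T ex t \<mu>}" using assms(3) by blast
  qed
qed

lemma Zad_T: "Zad F T ex xi T \<mu> = Unode F T ex xi T \<mu>"
  by (simp add: Zad_def)

lemma Zad_Suc: "t < T \<Longrightarrow> Zad F T ex xi t \<mu> = Unode F T ex xi t \<mu> \<inter>
     {w + q | w q. w \<in> (\<Inter>\<nu>\<in>succ F t \<mu>. Zad F T ex xi (Suc t) \<nu>) \<and> q \<in> Qnode F T ex t \<mu>}"
proof -
  assume t: "t < T"
  have e: "T - t = Suc (T - Suc t)" "T - Suc (T - Suc t) = t" using t by auto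
  show ?thesis unfolding Zad_def e(1) Zrec.simps e(2) ..
qed

lemma Z_poly_aux: "d \<le> T \<Longrightarrow> \<forall>\<mu>\<in>F (T - d). polyhedron (Zad F T ex xi (T - d) \<mu>)"
proof (induction d)
  case 0
  show ?case
  proof
    fix \<mu> assume mu: "\<mu> \<in> F (T - 0)"
    then obtain \<omega> where w: "\<omega> \<in> \<mu>" using atom_nonempty_mem by auto
    have "polyhedron {xi T \<omega> + q | q. q \<in> Qnode F T ex T \<mu>}"
      using Q_poly mu by (intro polyhedron_translate) auto
    thus "polyhedron (Zad F T ex xi (T - 0) \<mu>)" using Unode_eq[OF _ _ w] mu by (simp add: Zad_T)
  qed
next
  case (Suc d)
  define t where "t = T - Suc d"
  have t: "t < T" "Suc t = T - d" using Suc.prems by (auto simp: t_def)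
  have IH: "\<forall>\<nu>\<in>F (Suc t). polyhedron (Zad F T ex xi (Suc t) \<nu>)" using Suc t by simp
  show ?case unfolding t_def[symmetric]
  proof
    fix \<mu> assume mu: "\<mu> \<in> F t"
    obtain \<omega>0 where w0: "\<omega>0 \<in> \<mu>" using atom_nonempty_mem[OF _ mu] t by auto
    have "polyhedron (\<Inter>\<nu>\<in>succ F t \<mu>. Zad F T ex xi (Suc t) \<nu>)"
      using IH by (intro polyhedron_Inter) (auto simp: succ_def)
    hence p1: "polyhedron {w + q | w q. w \<in> (\<Inter>\<nu>\<in>succ F t \<mu>. Zad F T ex xi (Suc t) \<nu>) \<and> q \<in> Qnode F T ex t \<mu>}"
      using Q_poly[of t \<mu>] t mu by (intro polyhedron_sums) auto
    have "polyhedron {xi t \<omega>0 + q | q. q \<in> Qnode F T ex t \<mu>}"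
      using Q_poly mu t by (intro polyhedron_translate) auto
    hence "polyhedron (Unode F T ex xi t \<mu>)" using Unode_eq[OF _ mu w0] t by simp
    thus "polyhedron (Zad F T ex xi t \<mu>)" using p1 Zad_Suc[OF t(1)] by simp
  qed
qed

lemma Z_poly: "t \<le> T \<Longrightarrow> \<mu> \<in> F t \<Longrightarrow> polyhedron (Zad F T ex xi t \<mu>)"
  using Z_poly_aux[of "T - t"] by simp

lemma Zad0_closed: "closed (Zad0 F T ex xi)"
  unfolding Zad0_def using Z_poly[of 0 UNIV] F0 by (simp add: polyhedron_imp_closed)

end

context setting begin

definition ind :: "nat \<Rightarrow> nat \<Rightarrow> 'w \<Rightarrow> real" where
  "ind t = (\<lambda>s \<omega>. if s = t then 1 else 0)"

lemma ind_mst: "t \<le> T \<Longrightarrow> ind t \<in> mixed_stopping_times F T"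
  unfolding mixed_stopping_times_def ind_def
  by (auto simp: meas_const)

lemma ts_meas: assumes "trading_strategy F T y" "s \<in> {1..T+1}" shows "meas (F (s - 1)) (y s)"
  using assms unfolding trading_strategy_def by blast

lemma ts_meas_t: assumes "trading_strategy F T y" "t \<le> T" shows "meas (F t) (y t)"
proof (cases t)
  case 0
  have "\<forall>\<omega> \<omega>'. y 0 \<omega> = y 0 \<omega>'" using assms(1) unfolding trading_strategy_def by blast
  thus ?thesis using 0 unfolding meas_def by blast
next
  case (Suc t')
  have "Suc t' \<in> {1..T+1}" using Suc assms(2) by simp
  hence "meas (F (Suc t' - 1)) (y (Suc t'))" by (rule ts_meas[OF assms(1)])
  thus ?thesis using meas_mono[of t' t] Suc assms(2) by simp
qed

lemma dirB_aux:
  assumes Y: "Y \<in> Phi_ag F T ex xi"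
  shows "d \<le> T \<Longrightarrow> \<forall>\<omega>. Y (ind (T - d)) (T - d) \<omega> \<in> Zad F T ex xi (T - d) (atom (T - d) \<omega>)"
proof -
  have PS: "\<And>ch. ch \<in> mixed_stopping_times F T \<Longrightarrow> trading_strategy F T (Y ch)"
    using Y unfolding Phi_ag_def by blast
  have PK: "\<And>ch t. ch \<in> mixed_stopping_times F T \<Longrightarrow> t \<le> T \<Longrightarrow>
        inK ex t (\<lambda>\<omega>. Y ch t \<omega> - ch t \<omega> *\<^sub>R xi t \<omega> - Y ch (Suc t) \<omega>)"
    using Y unfolding Phi_ag_def by blast
  have PN: "\<And>ch ch' t \<omega>. ch \<in> mixed_stopping_times F T \<Longrightarrow> ch' \<in> mixed_stopping_times F T \<Longrightarrow> t \<le> T+1 \<Longrightarrow>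
        (\<forall>s<t. ch s \<omega> = ch' s \<omega>) \<Longrightarrow> Y ch t \<omega> = Y ch' t \<omega>"
    using Y unfolding Phi_ag_def by blast
  have U: "Y (ind t) t \<omega> \<in> Unode F T ex xi t (atom t \<omega>)" if t: "t \<le> T" for t \<omega>
  proof -
    define ch where "ch = ind t"
    have chi: "ch \<in> mixed_stopping_times F T" unfolding ch_def using ind_mst[OF t] .
    define g where "g \<omega> = Y ch t \<omega> - xi t \<omega>" for \<omega>
    have mg: "meas (F t) g" unfolding g_def
      using ts_meas_t[OF PS[OF chi] t] xi_adapted[OF t] by (rule meas_comp2)
    have "qchain t g (Y ch)"
      unfolding qchain_def
    proof (intro conjI ballI)
      fix s assume "s \<in> {t+1..T+1}"
      thus "meas (F (s - 1)) (Y ch s)" using ts_meas[OF PS[OF chi]] by simp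
    next
      show "Y ch (T+1) = (\<lambda>_. 0)" using PS[OF chi] unfolding trading_strategy_def by blast
    next
      show "inK ex t (\<lambda>\<omega>. g \<omega> - Y ch (t+1) \<omega>)"
        using PK[OF chi t] by (simp add: g_def ch_def ind_def)
    next
      fix s assume s: "s \<in> {t+1..T}"
      hence "inK ex s (\<lambda>\<omega>. Y ch s \<omega> - ch s \<omega> *\<^sub>R xi s \<omega> - Y ch (Suc s) \<omega>)" using PK[OF chi] by simp
      thus "inK ex s (\<lambda>\<omega>. Y ch s \<omega> - Y ch (Suc s) \<omega>)" using s by (simp add: ch_def ind_def)
    qed
    hence gQ: "g \<in> Qset F T ex t" using mg by (auto simp: Qset_iff)
    have wa: "\<omega> \<in> atom t \<omega>" using atom(2)[OF t] .
    have "g \<omega> \<in> Qnode F T ex t (atom t \<omega>)" unfolding Qnode_iff using gQ wa by blast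
    moreover have "Y ch t \<omega> = xi t \<omega> + g \<omega>" by (simp add: g_def)
    ultimately show ?thesis unfolding Unode_def ch_def using wa by blast
  qed
  show "d \<le> T \<Longrightarrow> \<forall>\<omega>. Y (ind (T - d)) (T - d) \<omega> \<in> Zad F T ex xi (T - d) (atom (T - d) \<omega>)"
  proof (induction d)
    case 0
    show ?case using U[of T] by (simp add: Zad_T)
  next
    case (Suc d)
    define t where "t = T - Suc d"
    have t: "t < T" "Suc t = T - d" using Suc.prems by (auto simp: t_def)
    have IH: "\<forall>\<omega>. Y (ind (Suc t)) (Suc t) \<omega> \<in> Zad F T ex xi (Suc t) (atom (Suc t) \<omega>)" using Suc t by simp
    show ?case unfolding t_def[symmetric]
    proof
      fix \<omega>
      have tT: "t \<le> T" "Suc t \<le> T" using t by auto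
      define ch' where "ch' = ind (Suc t)"
      have chi': "ch' \<in> mixed_stopping_times F T" unfolding ch'_def using ind_mst[OF tT(2)] .
      have chi: "ind t \<in> mixed_stopping_times F T" using ind_mst[OF tT(1)] .
      have eq: "Y (ind t) t \<omega> = Y ch' t \<omega>"
        using PN[OF chi chi', of t \<omega>] tT by (simp add: ch'_def ind_def)
      define w where "w = Y ch' (Suc t) \<omega>"
      have mw: "meas (F t) (Y ch' (Suc t))" using ts_meas[OF PS[OF chi'], of "Suc t"] tT by simp
      have w: "w \<in> (\<Inter>\<nu>\<in>succ F t (atom t \<omega>). Zad F T ex xi (Suc t) \<nu>)"
      proof
        fix \<nu> assume nu: "\<nu> \<in> succ F t (atom t \<omega>)"
        hence nu': "\<nu> \<in> F (Suc t)" "\<nu> \<subseteq> atom t \<omega>" by (auto simp: succ_def)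
        obtain \<omega>' where w': "\<omega>' \<in> \<nu>" using atom_nonempty_mem[OF tT(2) nu'(1)] by blast
        have an: "atom (Suc t) \<omega>' = \<nu>" using atom_unique[OF tT(2) nu'(1) w'] .
        have "Y ch' (Suc t) \<omega>' = w" unfolding w_def using meas_atom[OF tT(1) mw] nu'(2) w' by blast
        thus "w \<in> Zad F T ex xi (Suc t) \<nu>" using IH an by (metis ch'_def)
      qed
      have "inK ex t (\<lambda>\<omega>. Y ch' t \<omega> - ch' t \<omega> *\<^sub>R xi t \<omega> - Y ch' (Suc t) \<omega>)" using PK[OF chi' tT(1)] .
      hence "Y ch' t \<omega> - w \<in> Kcone ex t \<omega>" unfolding inK_def w_def by (simp add: ch'_def ind_def)
      hence q: "Y ch' t \<omega> - w \<in> Qnode F T ex t (atom t \<omega>)" using K_sub_Q[OF tT(1)] by blast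
      have "Y (ind t) t \<omega> = w + (Y ch' t \<omega> - w)" using eq by simp
      hence "Y (ind t) t \<omega> \<in> {w + q | w q. w \<in> (\<Inter>\<nu>\<in>succ F t (atom t \<omega>). Zad F T ex xi (Suc t) \<nu>) \<and> q \<in> Qnode F T ex t (atom t \<omega>)}"
        using w q by blast
      thus "Y (ind t) t \<omega> \<in> Zad F T ex xi t (atom t \<omega>)" using U[OF tT(1)] Zad_Suc[OF t(1)] by simp
    qed
  qed
qed

lemma dirB:
  assumes Y: "Y \<in> Phi_ag F T ex xi" and iv: "initial_value F T Y x"
  shows "x \<in> Zad0 F T ex xi"
proof -
  have "Y (ind 0) 0 \<omega> \<in> Zad F T ex xi 0 (atom 0 \<omega>)" for \<omega>
    using dirB_aux[OF Y, of T] by simp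
  moreover have "Y (ind 0) 0 \<omega> = x" for \<omega> using iv ind_mst[of 0] unfolding initial_value_def by simp
  ultimately show ?thesis unfolding Zad0_def by (simp add: atom_0)
qed

end

context setting begin

lemma K_gen1: "ex t \<omega> j k *\<^sub>R axis j 1 - axis k 1 \<in> Kcone ex t \<omega>"
  unfolding Kcone_def by (rule hull_inc) blast
lemma K_gen2: "axis k 1 \<in> Kcone ex t \<omega>"
  unfolding Kcone_def by (rule hull_inc) blast

lemma delta1: fixes f :: "'k::finite \<Rightarrow> real" shows "(\<Sum>k\<in>UNIV. f k * (if i = k then 1 else 0)) = f i"
proof -
  have "(\<Sum>k\<in>UNIV. f k * (if i = k then 1 else 0)) = (\<Sum>k\<in>UNIV. if i = k then f k else 0)"
    by (rule sum.cong) auto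
  also have "\<dots> = f i" by (simp add: sum.delta sum.delta')
  finally show ?thesis .
qed

lemma K_big:
  assumes "x \<ge> (\<Sum>k\<in>UNIV. \<bar>v$k\<bar> * ex t \<omega> j k)"
  shows "x *\<^sub>R axis j 1 - v \<in> Kcone ex t \<omega>"
proof -
  define M where "M = (\<Sum>k\<in>UNIV. \<bar>v$k\<bar> * ex t \<omega> j k)"
  have id: "x *\<^sub>R axis j 1 - v = (\<Sum>k\<in>UNIV. \<bar>v$k\<bar> *\<^sub>R (ex t \<omega> j k *\<^sub>R axis j 1 - axis k 1))
      + (\<Sum>k\<in>UNIV. (\<bar>v$k\<bar> - v$k) *\<^sub>R axis k 1) + (x - M) *\<^sub>R axis j 1"
  proof (subst vec_eq_iff, intro allI)
    fix i
    show "(x *\<^sub>R axis j 1 - v) $ i = ((\<Sum>k\<in>UNIV. \<bar>v$k\<bar> *\<^sub>R (ex t \<omega> j k *\<^sub>R axis j 1 - axis k 1))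
      + (\<Sum>k\<in>UNIV. (\<bar>v$k\<bar> - v$k) *\<^sub>R axis k 1) + (x - M) *\<^sub>R axis j 1) $ i"
    proof (cases "i = j")
      case True
      have a: "(\<Sum>k\<in>UNIV. \<bar>v$k\<bar> * (ex t \<omega> j k - (if i = k then 1 else 0))) = M - \<bar>v$i\<bar>"
        unfolding M_def by (simp add: right_diff_distrib sum_subtractf if_distrib[of "\<lambda>z. \<bar>v$k\<bar> * z" for k] sum.delta)
      have b: "(\<Sum>k\<in>UNIV. (\<bar>v$k\<bar> - v$k) * (if i = k then 1 else 0)) = \<bar>v$i\<bar> - v$i"
        by (rule delta1)
      show ?thesis using True a b by (simp add: axis_def)
    next
      case False
      have a: "(\<Sum>k\<in>UNIV. \<bar>v$k\<bar> * (0 - (if i = k then 1 else 0))) = - \<bar>v$i\<bar>"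
        using delta1[of "\<lambda>k. \<bar>v$k\<bar>" i] by (simp add: sum_negf)
      have b: "(\<Sum>k\<in>UNIV. (\<bar>v$k\<bar> - v$k) * (if i = k then 1 else 0)) = \<bar>v$i\<bar> - v$i"
        by (rule delta1)
      show ?thesis using False a b by (simp add: axis_def)
    qed
  qed
  have "(\<Sum>k\<in>UNIV. \<bar>v$k\<bar> *\<^sub>R (ex t \<omega> j k *\<^sub>R axis j 1 - axis k 1)) \<in> Kcone ex t \<omega>"
    by (intro K_sum K_mul K_gen1) auto
  moreover have "(\<Sum>k\<in>UNIV. (\<bar>v$k\<bar> - v$k) *\<^sub>R axis k 1) \<in> Kcone ex t \<omega>"
    by (intro K_sum K_mul K_gen2) auto
  moreover have "(x - M) *\<^sub>R axis j 1 \<in> Kcone ex t \<omega>"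
    using assms by (intro K_mul K_gen2) (auto simp: M_def)
  ultimately show ?thesis unfolding id by (intro K_add)
qed

definition Bnd :: "'d \<Rightarrow> real" where
  "Bnd j = (\<Sum>s\<le>T. \<Sum>\<omega>\<in>UNIV. \<bar>\<Sum>k\<in>UNIV. \<bar>xi s \<omega> $ k\<bar> * ex s \<omega> j k\<bar>)"

lemma Bnd_ge: "s \<le> T \<Longrightarrow> (\<Sum>k\<in>UNIV. \<bar>xi s \<omega> $ k\<bar> * ex s \<omega> j k) \<le> Bnd j"
proof -
  assume s: "s \<le> T"
  have "(\<Sum>k\<in>UNIV. \<bar>xi s \<omega> $ k\<bar> * ex s \<omega> j k) \<le> \<bar>\<Sum>k\<in>UNIV. \<bar>xi s \<omega> $ k\<bar> * ex s \<omega> j k\<bar>" by simp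
  also have "\<dots> \<le> (\<Sum>\<omega>\<in>UNIV. \<bar>\<Sum>k\<in>UNIV. \<bar>xi s \<omega> $ k\<bar> * ex s \<omega> j k\<bar>)"
    by (rule member_le_sum) auto
  also have "\<dots> \<le> Bnd j" unfolding Bnd_def using s
    by (intro member_le_sum[of s "{..T}" "\<lambda>s. \<Sum>\<omega>\<in>UNIV. \<bar>\<Sum>k\<in>UNIV. \<bar>xi s \<omega> $ k\<bar> * ex s \<omega> j k\<bar>"]) (auto intro: sum_nonneg)
  finally show ?thesis .
qed

lemma zero_Qnode: "t \<le> T \<Longrightarrow> \<mu> \<in> F t \<Longrightarrow> (0::real^'d) \<in> Qnode F T ex t \<mu>"
proof -
  assume a: "t \<le> T" "\<mu> \<in> F t"
  obtain \<omega> where w: "\<omega> \<in> \<mu>" using atom_nonempty_mem[OF a] by blast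
  have "atom t \<omega> = \<mu>" using atom_unique[OF a w] .
  thus ?thesis using K_sub_Q[OF a(1) K0, of \<omega>] by simp
qed

lemma Zad_sub_U: "t \<le> T \<Longrightarrow> Zad F T ex xi t \<mu> \<subseteq> Unode F T ex xi t \<mu>"
proof -
  assume "t \<le> T"
  thus ?thesis
  proof (cases "t = T")
    case True thus ?thesis by (simp add: Zad_T)
  next
    case False thus ?thesis using \<open>t \<le> T\<close> Zad_Suc[of t \<mu>] by auto
  qed
qed

lemma Z_big_aux: "d \<le> T \<Longrightarrow> x \<ge> Bnd j \<Longrightarrow> \<forall>\<mu>\<in>F (T - d). x *\<^sub>R axis j 1 \<in> Zad F T ex xi (T - d) \<mu>"
proof -
  assume x: "x \<ge> Bnd j"
  have U: "x *\<^sub>R axis j 1 \<in> Unode F T ex xi t \<mu>" if t: "t \<le> T" and mu: "\<mu> \<in> F t" for t \<mu>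
  proof -
    obtain \<omega> where w: "\<omega> \<in> \<mu>" using atom_nonempty_mem[OF t mu] by blast
    have am: "atom t \<omega> = \<mu>" using atom_unique[OF t mu w] .
    have "x *\<^sub>R axis j 1 - xi t \<omega> \<in> Kcone ex t \<omega>"
      using Bnd_ge[OF t, of \<omega> j] x by (intro K_big) simp
    hence "x *\<^sub>R axis j 1 - xi t \<omega> \<in> Qnode F T ex t \<mu>" using K_sub_Q[OF t] am by blast
    moreover have "x *\<^sub>R axis j 1 = xi t \<omega> + (x *\<^sub>R axis j 1 - xi t \<omega>)" by simp
    ultimately show ?thesis using Unode_eq[OF t mu w] by blast
  qed
  show "d \<le> T \<Longrightarrow> \<forall>\<mu>\<in>F (T - d). x *\<^sub>R axis j 1 \<in> Zad F T ex xi (T - d) \<mu>"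
  proof (induction d)
    case 0
    thus ?case using U[of T] by (simp add: Zad_T)
  next
    case (Suc d)
    define t where "t = T - Suc d"
    have t: "t < T" "Suc t = T - d" using Suc.prems by (auto simp: t_def)
    have IH: "\<forall>\<nu>\<in>F (Suc t). x *\<^sub>R axis j 1 \<in> Zad F T ex xi (Suc t) \<nu>" using Suc t by simp
    show ?case unfolding t_def[symmetric]
    proof
      fix \<mu> assume mu: "\<mu> \<in> F t"
      have "x *\<^sub>R axis j 1 \<in> (\<Inter>\<nu>\<in>succ F t \<mu>. Zad F T ex xi (Suc t) \<nu>)"
        using IH by (auto simp: succ_def)
      moreover have "(0::real^'d) \<in> Qnode F T ex t \<mu>" using zero_Qnode[OF _ mu] t by simp
      moreover have "x *\<^sub>R axis j 1 = x *\<^sub>R axis j 1 + 0" by simp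
      ultimately have "x *\<^sub>R axis j 1 \<in> {w + q | w q. w \<in> (\<Inter>\<nu>\<in>succ F t \<mu>. Zad F T ex xi (Suc t) \<nu>) \<and> q \<in> Qnode F T ex t \<mu>}"
        by blast
      thus "x *\<^sub>R axis j 1 \<in> Zad F T ex xi t \<mu>" using U[OF _ mu] t Zad_Suc[OF t(1)] by simp
    qed
  qed
qed

lemma Z_big: "x \<ge> Bnd j \<Longrightarrow> x *\<^sub>R axis j 1 \<in> Zad0 F T ex xi"
  using Z_big_aux[of T j x] F0 unfolding Zad0_def by simp

lemma Z_lower:
  assumes xz: "x *\<^sub>R axis j 1 \<in> Zad0 F T ex xi"
  shows "x \<ge> - (\<Sum>k\<in>UNIV. \<bar>(- xi 0 \<omega>0) $ k\<bar> * ex 0 \<omega>0 j k)"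
proof (rule ccontr)
  define M where "M = (\<Sum>k\<in>UNIV. \<bar>(- xi 0 \<omega>0) $ k\<bar> * ex 0 \<omega>0 j k)"
  assume "\<not> x \<ge> - (\<Sum>k\<in>UNIV. \<bar>(- xi 0 \<omega>0) $ k\<bar> * ex 0 \<omega>0 j k)"
  hence xM: "x + M < 0" unfolding M_def by simp
  define a where "a = - (x + M)"
  have a: "a > 0" using xM by (simp add: a_def)
  have t0: "(0::nat) \<le> T" by simp
  have U0: "UNIV \<in> F 0" using F0 by simp
  have "x *\<^sub>R axis j 1 \<in> Unode F T ex xi 0 UNIV" using Zad_sub_U[OF t0] xz unfolding Zad0_def by blast
  hence "x *\<^sub>R axis j 1 \<in> {xi 0 \<omega>0 + q | q. q \<in> Qnode F T ex 0 UNIV}" using Unode_eq[OF t0 U0] by blast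
  hence "x *\<^sub>R axis j 1 - xi 0 \<omega>0 \<in> Qnode F T ex 0 UNIV" by auto
  then obtain z \<omega>1 where z: "z \<in> Qset F T ex 0" "x *\<^sub>R axis j 1 - xi 0 \<omega>0 = z \<omega>1" unfolding Qnode_iff by blast
  then obtain y where y: "qchain 0 z y" "meas (F 0) z" by (auto simp: Qset_iff)
  have zc: "z \<omega> = x *\<^sub>R axis j 1 - xi 0 \<omega>0" for \<omega>
    using meas_atom[OF t0 y(2), of \<omega>1 \<omega>] z(2) by (simp add: atom_0)
  have k0: "M *\<^sub>R axis j 1 - (- xi 0 \<omega>0) \<in> Kcone ex 0 \<omega>0" by (rule K_big) (simp add: M_def)
  have Keq: "Kcone ex 0 \<omega> = Kcone ex 0 \<omega>0" for \<omega> using Kcone_atom[OF t0] by (simp add: atom_0)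
  have key: "- (a *\<^sub>R axis j 1) - y 1 \<omega> \<in> Kcone ex 0 \<omega>" for \<omega>
  proof -
    have "z \<omega> - y (0+1) \<omega> \<in> Kcone ex 0 \<omega>" using y(1) unfolding qchain_def inK_def by blast
    hence m: "(z \<omega> - y 1 \<omega>) + (M *\<^sub>R axis j 1 - (- xi 0 \<omega>0)) \<in> Kcone ex 0 \<omega>"
      using k0 Keq by (intro K_add) auto
    have e: "(z \<omega> - y 1 \<omega>) + (M *\<^sub>R axis j 1 - (- xi 0 \<omega>0)) = - (a *\<^sub>R axis j 1) - y 1 \<omega>"
      unfolding zc a_def by (simp add: algebra_simps)
    show ?thesis using m unfolding e .
  qed
  have ymeas: "meas (F (s - 1)) (y s)" if "s \<in> {1..T+1}" for s using y(1) that unfolding qchain_def by auto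
  have yT: "y (T+1) = (\<lambda>_. 0)" using y(1) unfolding qchain_def by auto
  have ystep: "inK ex s (\<lambda>\<omega>. y s \<omega> - y (Suc s) \<omega>)" if "s \<in> {1..T}" for s
    using y(1) that unfolding qchain_def by auto
  define y' :: "nat \<Rightarrow> 'w \<Rightarrow> real^'d" where
    "y' t = (if t = 0 then (\<lambda>_. 0) else if t \<le> T then (\<lambda>\<omega>. y t \<omega> + a *\<^sub>R axis j 1) else (\<lambda>_. 0))" for t
  define xx :: "'w \<Rightarrow> real^'d" where "xx = (\<lambda>_. a *\<^sub>R axis j 1)"
  have ts: "trading_strategy F T y'"
    unfolding trading_strategy_def
  proof (intro conjI allI ballI)
    fix \<omega> \<omega>' show "y' 0 \<omega> = y' 0 \<omega>'" by (simp add: y'_def)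
  next
    fix t assume t: "t \<in> {1..T+1}"
    show "meas (F (t - 1)) (y' t)"
    proof (cases "t \<le> T")
      case True
      hence "y' t = (\<lambda>\<omega>. y t \<omega> + a *\<^sub>R axis j 1)" using t by (simp add: y'_def)
      thus ?thesis using meas_comp[OF ymeas[OF t], of "\<lambda>v. v + a *\<^sub>R axis j 1"] by simp
    next
      case False
      hence "y' t = (\<lambda>_. 0)" using t by (simp add: y'_def)
      thus ?thesis by (simp add: meas_const)
    qed
  next
    show "y' (T+1) = (\<lambda>_. 0)" by (simp add: y'_def)
  qed
  have steps: "\<forall>t<T. inK ex t (\<lambda>\<omega>. y' t \<omega> - y' (Suc t) \<omega>)"
  proof (intro allI impI)
    fix t assume t: "t < T"
    show "inK ex t (\<lambda>\<omega>. y' t \<omega> - y' (Suc t) \<omega>)"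
    proof (cases "t = 0")
      case True
      have "y' t \<omega> - y' (Suc t) \<omega> = - (a *\<^sub>R axis j 1) - y 1 \<omega>" for \<omega>
        using True t by (simp add: y'_def algebra_simps)
      thus ?thesis unfolding inK_def using key True by simp
    next
      case False
      hence "inK ex t (\<lambda>\<omega>. y t \<omega> - y (Suc t) \<omega>)" using ystep t by simp
      thus ?thesis using t False unfolding inK_def by (simp add: y'_def)
    qed
  qed
  have last: "inK ex T (\<lambda>\<omega>. y' T \<omega> - xx \<omega>)"
  proof (cases "T = 0")
    case True
    have "y 1 = (\<lambda>_. 0)" using yT True by simp
    thus ?thesis using True key unfolding inK_def by (simp add: y'_def xx_def)
  next
    case False
    hence "inK ex T (\<lambda>\<omega>. y T \<omega> - y (Suc T) \<omega>)" using ystep by simp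
    thus ?thesis using False yT unfolding inK_def by (simp add: y'_def xx_def)
  qed
  have pos: "\<forall>\<omega> i. 0 \<le> xx \<omega> $ i" using a by (simp add: xx_def axis_def)
  have nz: "xx \<noteq> (\<lambda>_. 0)"
  proof
    assume "xx = (\<lambda>_. 0)"
    hence "xx undefined $ j = 0" by simp
    thus False using a by (simp add: xx_def axis_def)
  qed
  have "meas (F T) xx" by (simp add: xx_def meas_const)
  moreover have "\<forall>\<omega>. y' 0 \<omega> = 0" by (simp add: y'_def)
  ultimately show False using NA ts steps last pos nz unfolding no_arbitrage_def by blast
qed

end

lemma alg_identity:
  fixes ch :: "nat \<Rightarrow> real" and Z :: "nat \<Rightarrow> 'a::real_vector" and U V :: "nat \<Rightarrow> nat \<Rightarrow> 'a"
  defines "R \<equiv> \<lambda>t. 1 - (\<Sum>s<t. ch s)"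
  defines "Y \<equiv> \<lambda>t. R t *\<^sub>R Z t + (\<Sum>s<t. ch s *\<^sub>R U s t + R (Suc s) *\<^sub>R V s t)"
  shows "Y t - ch t *\<^sub>R X - Y (Suc t) =
     ch t *\<^sub>R (Z t - X - U t (Suc t)) + R (Suc t) *\<^sub>R (Z t - Z (Suc t) - V t (Suc t)) +
     (\<Sum>s<t. ch s *\<^sub>R (U s t - U s (Suc t)) + R (Suc s) *\<^sub>R (V s t - V s (Suc t)))"
proof -
  have RS: "R (Suc t) = R t - ch t" unfolding R_def by simp
  have S: "(\<Sum>s<t. ch s *\<^sub>R (U s t - U s (Suc t)) + R (Suc s) *\<^sub>R (V s t - V s (Suc t))) =
      (\<Sum>s<t. ch s *\<^sub>R U s t + R (Suc s) *\<^sub>R V s t) - (\<Sum>s<t. ch s *\<^sub>R U s (Suc t) + R (Suc s) *\<^sub>R V s (Suc t))"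
    by (simp add: sum_subtractf[symmetric] algebra_simps)
  have Y1: "Y (Suc t) = (R t - ch t) *\<^sub>R Z (Suc t) + (\<Sum>s<t. ch s *\<^sub>R U s (Suc t) + R (Suc s) *\<^sub>R V s (Suc t))
      + (ch t *\<^sub>R U t (Suc t) + (R t - ch t) *\<^sub>R V t (Suc t))"
    unfolding Y_def RS[symmetric] by simp
  show ?thesis unfolding S Y1 RS by (simp add: Y_def algebra_simps)
qed

context setting begin

primrec zz :: "real^'d \<Rightarrow> nat \<Rightarrow> 'w \<Rightarrow> real^'d" where
  "zz z0 0 = (\<lambda>_. z0)"
| "zz z0 (Suc t) = (\<lambda>\<omega>. SOME w. w \<in> (\<Inter>\<nu>\<in>succ F t (atom t \<omega>). Zad F T ex xi (Suc t) \<nu>) \<and>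
                         zz z0 t \<omega> - w \<in> Qnode F T ex t (atom t \<omega>))"

lemma zz_meas_Suc_aux:
  assumes t: "t \<le> T" and m: "meas (F t) (zz z0 t)"
  shows "meas (F t) (zz z0 (Suc t))"
proof (rule measI[OF t])
  fix \<omega> \<omega>' assume w: "\<omega>' \<in> atom t \<omega>"
  have "atom t \<omega>' = atom t \<omega>" using atom_sym[OF t w] .
  moreover have "zz z0 t \<omega>' = zz z0 t \<omega>" using meas_atom[OF t m w] .
  ultimately show "zz z0 (Suc t) \<omega>' = zz z0 (Suc t) \<omega>" by simp
qed

lemma zz_meas: "t \<le> T \<Longrightarrow> meas (F t) (zz z0 t)"
proof (induction t)
  case 0 thus ?case by (simp add: meas_const)
next
  case (Suc t)
  hence "meas (F t) (zz z0 (Suc t))" using zz_meas_Suc_aux by simp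
  thus ?case using meas_mono[of t "Suc t"] Suc.prems by simp
qed

lemma zz_meas_Suc: "t \<le> T \<Longrightarrow> meas (F t) (zz z0 (Suc t))"
  using zz_meas_Suc_aux zz_meas by simp

lemma zz_step:
  assumes t: "t < T" and z: "zz z0 t \<omega> \<in> Zad F T ex xi t (atom t \<omega>)"
  shows "zz z0 (Suc t) \<omega> \<in> (\<Inter>\<nu>\<in>succ F t (atom t \<omega>). Zad F T ex xi (Suc t) \<nu>) \<and>
         zz z0 t \<omega> - zz z0 (Suc t) \<omega> \<in> Qnode F T ex t (atom t \<omega>)"
proof -
  have "zz z0 t \<omega> \<in> {w + q | w q. w \<in> (\<Inter>\<nu>\<in>succ F t (atom t \<omega>). Zad F T ex xi (Suc t) \<nu>) \<and> q \<in> Qnode F T ex t (atom t \<omega>)}"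
    using z Zad_Suc[OF t] by blast
  then obtain w q where wq: "zz z0 t \<omega> = w + q" "w \<in> (\<Inter>\<nu>\<in>succ F t (atom t \<omega>). Zad F T ex xi (Suc t) \<nu>)" "q \<in> Qnode F T ex t (atom t \<omega>)"
    by blast
  have "q = zz z0 t \<omega> - w" using wq(1) by simp
  hence "\<exists>w. w \<in> (\<Inter>\<nu>\<in>succ F t (atom t \<omega>). Zad F T ex xi (Suc t) \<nu>) \<and> zz z0 t \<omega> - w \<in> Qnode F T ex t (atom t \<omega>)"
    using wq(2,3) by blast
  from someI_ex[OF this] show ?thesis by simp
qed

lemma zz_Z: assumes z0: "z0 \<in> Zad0 F T ex xi" shows "t \<le> T \<Longrightarrow> zz z0 t \<omega> \<in> Zad F T ex xi t (atom t \<omega>)"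
proof (induction t arbitrary: \<omega>)
  case 0 thus ?case using z0 by (simp add: Zad0_def atom_0)
next
  case (Suc t)
  have t: "t < T" "t \<le> T" using Suc.prems by auto
  have "zz z0 (Suc t) \<omega> \<in> (\<Inter>\<nu>\<in>succ F t (atom t \<omega>). Zad F T ex xi (Suc t) \<nu>)"
    using zz_step[OF t(1) Suc.IH[OF t(2)]] by blast
  moreover have "atom (Suc t) \<omega> \<in> succ F t (atom t \<omega>)"
    using atom(1)[OF Suc.prems] atom_mono[of t "Suc t"] Suc.prems by (auto simp: succ_def)
  ultimately show ?case by blast
qed

lemma zz_V: "z0 \<in> Zad0 F T ex xi \<Longrightarrow> t < T \<Longrightarrow> zz z0 t \<omega> - zz z0 (Suc t) \<omega> \<in> Qnode F T ex t (atom t \<omega>)"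
  using zz_step zz_Z by simp

lemma zz_U: assumes z0: "z0 \<in> Zad0 F T ex xi" and t: "t \<le> T"
  shows "zz z0 t \<omega> - xi t \<omega> \<in> Qnode F T ex t (atom t \<omega>)"
proof -
  have "zz z0 t \<omega> \<in> Unode F T ex xi t (atom t \<omega>)" using zz_Z[OF z0 t] Zad_sub_U[OF t] by blast
  hence "zz z0 t \<omega> \<in> {xi t \<omega> + q | q. q \<in> Qnode F T ex t (atom t \<omega>)}"
    using Unode_eq[OF t atom(1)[OF t] atom(2)[OF t]] by blast
  thus ?thesis by auto
qed

lemma meas_sum: "finite A \<Longrightarrow> (\<And>a. a \<in> A \<Longrightarrow> meas P (f a)) \<Longrightarrow> meas P (\<lambda>\<omega>. \<Sum>a\<in>A. f a \<omega>)"
proof (induction A rule: finite_induct)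
  case empty thus ?case by (simp add: meas_const)
next
  case (insert a A)
  have m1: "meas P (f a)" using insert.prems by simp
  have m2: "meas P (\<lambda>\<omega>. \<Sum>a\<in>A. f a \<omega>)" using insert.IH insert.prems by simp
  have "meas P (\<lambda>\<omega>. f a \<omega> + (\<Sum>a\<in>A. f a \<omega>))" using meas_comp2[OF m1 m2, of "(+)"] by simp
  thus ?case using insert by simp
qed

lemma mst_facts:
  assumes "ch \<in> mixed_stopping_times F T"
  shows "\<And>s. s \<le> T \<Longrightarrow> meas (F s) (ch s)" "\<And>s \<omega>. s \<le> T \<Longrightarrow> 0 \<le> ch s \<omega>"
    "\<And>\<omega>. (\<Sum>s\<le>T. ch s \<omega>) = 1"
  using assms unfolding mixed_stopping_times_def by auto

lemma r_nonneg:
  assumes ch: "ch \<in> mixed_stopping_times F T" and u: "u \<le> Suc T"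
  shows "0 \<le> 1 - (\<Sum>s<u. ch s \<omega>)"
proof -
  have "(\<Sum>s<u. ch s \<omega>) \<le> (\<Sum>s\<le>T. ch s \<omega>)"
    using u mst_facts(2)[OF ch] by (intro sum_mono2) auto
  thus ?thesis using mst_facts(3)[OF ch] by simp
qed

lemma r_T: assumes ch: "ch \<in> mixed_stopping_times F T" shows "1 - (\<Sum>s<Suc T. ch s \<omega>) = 0"
  using mst_facts(3)[OF ch] by (simp add: lessThan_Suc_atMost)

lemma dirA:
  assumes z0: "z0 \<in> Zad0 F T ex xi"
  shows "\<exists>Y\<in>Phi_ag F T ex xi. initial_value F T Y z0"
proof -
  have gU: "\<forall>t. \<exists>y. t \<le> T \<longrightarrow> qchain t (\<lambda>\<omega>. zz z0 t \<omega> - xi t \<omega>) y"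
  proof
    fix t show "\<exists>y. t \<le> T \<longrightarrow> qchain t (\<lambda>\<omega>. zz z0 t \<omega> - xi t \<omega>) y"
    proof (cases "t \<le> T")
      case True
      have "(\<lambda>\<omega>. zz z0 t \<omega> - xi t \<omega>) \<in> Qset F T ex t"
      proof (rule glue[OF True])
        show "meas (F t) (\<lambda>\<omega>. zz z0 t \<omega> - xi t \<omega>)"
          using meas_comp2[OF zz_meas[OF True] xi_adapted[OF True], of "(-)"] by simp
        fix \<omega> show "zz z0 t \<omega> - xi t \<omega> \<in> Qnode F T ex t (atom t \<omega>)" by (rule zz_U[OF z0 True])
      qed
      thus ?thesis by (auto simp: Qset_iff)
    qed simp
  qed
  obtain UC where UC: "\<forall>t. t \<le> T \<longrightarrow> qchain t (\<lambda>\<omega>. zz z0 t \<omega> - xi t \<omega>) (UC t)"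
    using choice[OF gU] by (elim exE) (rule that)
  have gV: "\<forall>t. \<exists>y. t < T \<longrightarrow> qchain t (\<lambda>\<omega>. zz z0 t \<omega> - zz z0 (Suc t) \<omega>) y"
  proof
    fix t show "\<exists>y. t < T \<longrightarrow> qchain t (\<lambda>\<omega>. zz z0 t \<omega> - zz z0 (Suc t) \<omega>) y"
    proof (cases "t < T")
      case True
      hence tT: "t \<le> T" by simp
      have "(\<lambda>\<omega>. zz z0 t \<omega> - zz z0 (Suc t) \<omega>) \<in> Qset F T ex t"
      proof (rule glue[OF tT])
        show "meas (F t) (\<lambda>\<omega>. zz z0 t \<omega> - zz z0 (Suc t) \<omega>)"
          using meas_comp2[OF zz_meas[OF tT] zz_meas_Suc[OF tT], of "(-)"] by simp
        fix \<omega> show "zz z0 t \<omega> - zz z0 (Suc t) \<omega> \<in> Qnode F T ex t (atom t \<omega>)" by (rule zz_V[OF z0 True])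
      qed
      thus ?thesis by (auto simp: Qset_iff)
    qed simp
  qed
  obtain VC where VC: "\<forall>t. t < T \<longrightarrow> qchain t (\<lambda>\<omega>. zz z0 t \<omega> - zz z0 (Suc t) \<omega>) (VC t)"
    using choice[OF gV] by (elim exE) (rule that)
  have UCm: "meas (F (u - 1)) (UC s u)" if "s \<le> T" "u \<in> {s+1..T+1}" for s u
    using UC that unfolding qchain_def by blast
  have UC0: "UC s (T+1) = (\<lambda>_. 0)" if "s \<le> T" for s
    using UC that unfolding qchain_def by blast
  have UCk0: "inK ex s (\<lambda>\<omega>. (zz z0 s \<omega> - xi s \<omega>) - UC s (Suc s) \<omega>)" if "s \<le> T" for s
    using UC that unfolding qchain_def by auto
  have UCk: "inK ex u (\<lambda>\<omega>. UC s u \<omega> - UC s (Suc u) \<omega>)" if "s \<le> T" "u \<in> {s+1..T}" for s u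
    using UC that unfolding qchain_def by blast
  have VCm: "meas (F (u - 1)) (VC s u)" if "s < T" "u \<in> {s+1..T+1}" for s u
    using VC that unfolding qchain_def by blast
  have VC0: "VC s (T+1) = (\<lambda>_. 0)" if "s < T" for s
    using VC that unfolding qchain_def by blast
  have VCk0: "inK ex s (\<lambda>\<omega>. (zz z0 s \<omega> - zz z0 (Suc s) \<omega>) - VC s (Suc s) \<omega>)" if "s < T" for s
    using VC that unfolding qchain_def by auto
  have VCk: "inK ex u (\<lambda>\<omega>. VC s u \<omega> - VC s (Suc u) \<omega>)" if "s < T" "u \<in> {s+1..T}" for s u
    using VC that unfolding qchain_def by blast
  define R :: "(nat \<Rightarrow> 'w \<Rightarrow> real) \<Rightarrow> nat \<Rightarrow> 'w \<Rightarrow> real" where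
    "R ch t \<omega> = 1 - (\<Sum>s<t. ch s \<omega>)" for ch t \<omega>
  define Y :: "(nat \<Rightarrow> 'w \<Rightarrow> real) \<Rightarrow> nat \<Rightarrow> 'w \<Rightarrow> real^'d" where
    "Y ch t \<omega> = R ch t \<omega> *\<^sub>R zz z0 t \<omega> + (\<Sum>s<t. ch s \<omega> *\<^sub>R UC s t \<omega> + R ch (Suc s) \<omega> *\<^sub>R VC s t \<omega>)" for ch t \<omega>
  have Y0: "Y ch 0 \<omega> = z0" for ch \<omega> by (simp add: Y_def R_def)
  have YT: "Y ch (T+1) = (\<lambda>_. 0)" if ch: "ch \<in> mixed_stopping_times F T" for ch
  proof
    fix \<omega>
    have "R ch (Suc T) \<omega> = 0" using r_T[OF ch] by (simp add: R_def)
    moreover have "ch s \<omega> *\<^sub>R UC s (Suc T) \<omega> + R ch (Suc s) \<omega> *\<^sub>R VC s (Suc T) \<omega> = 0" if "s < Suc T" for s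
    proof (cases "s < T")
      case True thus ?thesis using UC0[of s] VC0[of s] by simp
    next
      case False
      hence "s = T" using that by simp
      thus ?thesis using UC0[of s] \<open>R ch (Suc T) \<omega> = 0\<close> by simp
    qed
    ultimately show "Y ch (T+1) \<omega> = 0" unfolding Y_def by simp
  qed
  have step: "inK ex t (\<lambda>\<omega>. Y ch t \<omega> - ch t \<omega> *\<^sub>R xi t \<omega> - Y ch (Suc t) \<omega>)"
    if ch: "ch \<in> mixed_stopping_times F T" and t: "t \<le> T" for ch t
    unfolding inK_def
  proof
    fix \<omega>
    have eq: "Y ch t \<omega> - ch t \<omega> *\<^sub>R xi t \<omega> - Y ch (Suc t) \<omega> =
      ch t \<omega> *\<^sub>R (zz z0 t \<omega> - xi t \<omega> - UC t (Suc t) \<omega>) + R ch (Suc t) \<omega> *\<^sub>R (zz z0 t \<omega> - zz z0 (Suc t) \<omega> - VC t (Suc t) \<omega>) +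
     (\<Sum>s<t. ch s \<omega> *\<^sub>R (UC s t \<omega> - UC s (Suc t) \<omega>) + R ch (Suc s) \<omega> *\<^sub>R (VC s t \<omega> - VC s (Suc t) \<omega>))"
      using alg_identity[where ch="\<lambda>s. ch s \<omega>" and Z="\<lambda>t. zz z0 t \<omega>" and U="\<lambda>s t. UC s t \<omega>" and V="\<lambda>s t. VC s t \<omega>" and t=t and X="xi t \<omega>"]
      unfolding Y_def R_def by simp
    have c1: "ch t \<omega> *\<^sub>R (zz z0 t \<omega> - xi t \<omega> - UC t (Suc t) \<omega>) \<in> Kcone ex t \<omega>"
      using UCk0[OF t] mst_facts(2)[OF ch t] unfolding inK_def by (intro K_mul) auto
    have c2: "R ch (Suc t) \<omega> *\<^sub>R (zz z0 t \<omega> - zz z0 (Suc t) \<omega> - VC t (Suc t) \<omega>) \<in> Kcone ex t \<omega>"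
    proof (cases "t < T")
      case True
      have "0 \<le> R ch (Suc t) \<omega>" unfolding R_def using r_nonneg[OF ch, of "Suc t" \<omega>] True by simp
      thus ?thesis using VCk0[OF True] unfolding inK_def by (intro K_mul) auto
    next
      case False
      hence "t = T" using t by simp
      hence "R ch (Suc t) \<omega> = 0" using r_T[OF ch] by (simp add: R_def)
      thus ?thesis by (simp add: K0)
    qed
    have c3: "(\<Sum>s<t. ch s \<omega> *\<^sub>R (UC s t \<omega> - UC s (Suc t) \<omega>) + R ch (Suc s) \<omega> *\<^sub>R (VC s t \<omega> - VC s (Suc t) \<omega>)) \<in> Kcone ex t \<omega>"
    proof (rule K_sum)
      fix s assume s: "s \<in> {..<t}"
      have s': "s \<le> T" "s < T" "t \<in> {s+1..T}" using s t by auto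
      have "ch s \<omega> *\<^sub>R (UC s t \<omega> - UC s (Suc t) \<omega>) \<in> Kcone ex t \<omega>"
        using UCk[OF s'(1,3)] mst_facts(2)[OF ch s'(1)] unfolding inK_def by (intro K_mul) auto
      moreover have "R ch (Suc s) \<omega> *\<^sub>R (VC s t \<omega> - VC s (Suc t) \<omega>) \<in> Kcone ex t \<omega>"
      proof -
        have "0 \<le> R ch (Suc s) \<omega>" unfolding R_def using r_nonneg[OF ch, of "Suc s" \<omega>] s' by simp
        thus ?thesis using VCk[OF s'(2,3)] unfolding inK_def by (intro K_mul) auto
      qed
      ultimately show "ch s \<omega> *\<^sub>R (UC s t \<omega> - UC s (Suc t) \<omega>) + R ch (Suc s) \<omega> *\<^sub>R (VC s t \<omega> - VC s (Suc t) \<omega>) \<in> Kcone ex t \<omega>"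
        by (rule K_add)
    qed simp
    show "Y ch t \<omega> - ch t \<omega> *\<^sub>R xi t \<omega> - Y ch (Suc t) \<omega> \<in> Kcone ex t \<omega>"
      unfolding eq using c1 c2 c3 by (intro K_add)
  qed
  have Ymeas: "meas (F (u - 1)) (Y ch u)" if ch: "ch \<in> mixed_stopping_times F T" and u: "u \<in> {1..T+1}" for ch u
  proof (cases "u = T+1")
    case True thus ?thesis using YT[OF ch] by (simp add: meas_const)
  next
    case False
    then obtain t where tu: "u = Suc t" "t < T" using u by (cases u) auto
    have tT: "t \<le> T" using tu by simp
    have mch: "meas (F t) (ch s)" if "s \<le> t" for s
      using mst_facts(1)[OF ch, of s] meas_mono[of s t] that tT by simp
    have mR: "meas (F t) (R ch v)" if "v \<le> Suc t" for v
    proof -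
      have "meas (F t) (\<lambda>\<omega>. \<Sum>s<v. ch s \<omega>)" using that mch by (intro meas_sum) auto
      thus ?thesis unfolding R_def by (rule meas_comp)
    qed
    have m1: "meas (F t) (\<lambda>\<omega>. R ch (Suc t) \<omega> *\<^sub>R zz z0 (Suc t) \<omega>)"
      using mR[of "Suc t", OF order_refl] zz_meas_Suc[OF tT] by (rule meas_comp2)
    have m2: "meas (F t) (\<lambda>\<omega>. \<Sum>s<Suc t. ch s \<omega> *\<^sub>R UC s (Suc t) \<omega> + R ch (Suc s) \<omega> *\<^sub>R VC s (Suc t) \<omega>)"
    proof (rule meas_sum)
      fix s assume s: "s \<in> {..<Suc t}"
      have s': "s \<le> T" "s < T" "Suc t \<in> {s+1..T+1}" using s tu by auto
      have mcs: "meas (F t) (ch s)" using mch s by simp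
      have mu: "meas (F t) (UC s (Suc t))" using UCm[OF s'(1,3)] by simp
      have mrs: "meas (F t) (R ch (Suc s))" using mR s by simp
      have mv: "meas (F t) (VC s (Suc t))" using VCm[OF s'(2,3)] by simp
      have a: "meas (F t) (\<lambda>\<omega>. ch s \<omega> *\<^sub>R UC s (Suc t) \<omega>)"
        using meas_comp2[OF mcs mu, of "\<lambda>a b. a *\<^sub>R b"] by simp
      have b: "meas (F t) (\<lambda>\<omega>. R ch (Suc s) \<omega> *\<^sub>R VC s (Suc t) \<omega>)"
        using meas_comp2[OF mrs mv, of "\<lambda>a b. a *\<^sub>R b"] by simp
      show "meas (F t) (\<lambda>\<omega>. ch s \<omega> *\<^sub>R UC s (Suc t) \<omega> + R ch (Suc s) \<omega> *\<^sub>R VC s (Suc t) \<omega>)"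
        using meas_comp2[OF a b, of "(+)"] by simp
    qed simp
    have "meas (F t) (Y ch (Suc t))"
      using meas_comp2[OF m1 m2, of "(+)"] unfolding Y_def by simp
    thus ?thesis using tu by simp
  qed
  have NAnt: "Y ch t \<omega> = Y ch' t \<omega>" if "\<forall>s<t. ch s \<omega> = ch' s \<omega>" for ch ch' t \<omega>
  proof -
    have r: "R ch v \<omega> = R ch' v \<omega>" if "v \<le> t" for v
      unfolding R_def using that \<open>\<forall>s<t. ch s \<omega> = ch' s \<omega>\<close> by (auto intro!: sum.cong)
    show ?thesis unfolding Y_def using r \<open>\<forall>s<t. ch s \<omega> = ch' s \<omega>\<close> by (auto intro!: sum.cong)
  qed
  have "Y \<in> Phi_ag F T ex xi"
    unfolding Phi_ag_def
  proof (intro CollectI conjI ballI allI impI)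
    fix ch assume ch: "ch \<in> mixed_stopping_times F T"
    show "trading_strategy F T (Y ch)"
      unfolding trading_strategy_def using Y0 Ymeas[OF ch] YT[OF ch] by auto
  next
    fix ch t assume "ch \<in> mixed_stopping_times F T" "t \<le> T"
    thus "inK ex t (\<lambda>\<omega>. Y ch t \<omega> - ch t \<omega> *\<^sub>R xi t \<omega> - Y ch (Suc t) \<omega>)" by (rule step)
  next
    fix ch ch' :: "nat \<Rightarrow> 'w \<Rightarrow> real" and t :: nat and \<omega> :: 'w
    assume "ch \<in> mixed_stopping_times F T" "ch' \<in> mixed_stopping_times F T" "t \<le> T + 1" "\<forall>s<t. ch s \<omega> = ch' s \<omega>"
    show "Y ch t \<omega> = Y ch' t \<omega>" using \<open>\<forall>s<t. ch s \<omega> = ch' s \<omega>\<close> by (rule NAnt[where ch=ch and ch'=ch' and t=t and \<omega>=\<omega>])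
  qed
  moreover have "initial_value F T Y z0" unfolding initial_value_def using Y0 by simp
  ultimately show ?thesis by blast
qed

end

theorem theorem4p6:
  fixes F :: "nat \<Rightarrow> ('w::finite) set set"
    and T :: nat
    and P :: "'w \<Rightarrow> real"
    and ex :: "nat \<Rightarrow> 'w \<Rightarrow> 'd::finite \<Rightarrow> 'd \<Rightarrow> real"
    and xi :: "nat \<Rightarrow> 'w \<Rightarrow> real^'d"
  assumes prob_pos: "\<And>\<omega>. P \<omega> > 0"
    and prob_sum: "(\<Sum>\<omega>\<in>UNIV. P \<omega>) = 1"
    and partition: "\<And>t. t \<le> T \<Longrightarrow> partition_on UNIV (F t)"
    and refines: "\<And>t \<nu>. t < T \<Longrightarrow> \<nu> \<in> F (Suc t) \<Longrightarrow> \<exists>\<mu>\<in>F t. \<nu> \<subseteq> \<mu>"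
    and F0: "F 0 = {UNIV}"
    and FT: "F T = (\<lambda>\<omega>. {\<omega>}) ` UNIV"
    and pi_meas: "\<And>t j k. t \<le> T \<Longrightarrow> meas (F t) (\<lambda>\<omega>. ex t \<omega> j k)"
    and pi_pos: "\<And>t \<omega> j k. t \<le> T \<Longrightarrow> ex t \<omega> j k > 0"
    and pi_diag: "\<And>t \<omega> j. t \<le> T \<Longrightarrow> ex t \<omega> j j = 1"
    and xi_adapted: "\<And>t. t \<le> T \<Longrightarrow> meas (F t) (xi t)"
    and NA: "no_arbitrage F T ex"
  shows "Zad0 F T ex xi = {x. \<exists>Y\<in>Phi_ag F T ex xi. initial_value F T Y x}
         \<and> (\<forall>j. ask_price F T ex xi j *\<^sub>R axis j 1 \<in> Zad0 F T ex xi
                \<and> (\<forall>x. x *\<^sub>R axis j 1 \<in> Zad0 F T ex xi \<longrightarrow> ask_price F T ex xi j \<le> x)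
                \<and> (\<exists>Y\<in>Phi_ag F T ex xi. initial_value F T Y (ask_price F T ex xi j *\<^sub>R axis j 1)))"
proof -
  interpret setting F T ex xi
    by (rule setting.intro; fact)
  have Zeq: "Zad0 F T ex xi = {x. \<exists>Y\<in>Phi_ag F T ex xi. initial_value F T Y x}"
  proof (intro set_eqI iffI)
    fix x assume "x \<in> Zad0 F T ex xi"
    thus "x \<in> {x. \<exists>Y\<in>Phi_ag F T ex xi. initial_value F T Y x}" using dirA by simp
  next
    fix x assume "x \<in> {x. \<exists>Y\<in>Phi_ag F T ex xi. initial_value F T Y x}"
    then obtain Y where "Y \<in> Phi_ag F T ex xi" "initial_value F T Y x" by blast
    thus "x \<in> Zad0 F T ex xi" by (rule dirB)
  qed
  have main: "ask_price F T ex xi j *\<^sub>R axis j 1 \<in> Zad0 F T ex xi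
                \<and> (\<forall>x. x *\<^sub>R axis j 1 \<in> Zad0 F T ex xi \<longrightarrow> ask_price F T ex xi j \<le> x)
                \<and> (\<exists>Y\<in>Phi_ag F T ex xi. initial_value F T Y (ask_price F T ex xi j *\<^sub>R axis j 1))" for j
  proof -
    define S where "S = {x::real. x *\<^sub>R axis j 1 \<in> Zad0 F T ex xi}"
    have "S = {x. \<exists>Y\<in>Phi_ag F T ex xi. initial_value F T Y (x *\<^sub>R axis j 1)}"
      unfolding S_def by (simp add: Zeq)
    hence ap: "ask_price F T ex xi j = Inf S" unfolding ask_price_def by simp
    have ne: "S \<noteq> {}" using Z_big[of j "Bnd j"] unfolding S_def by blast
    have bdd: "bdd_below S"
    proof (rule bdd_belowI)
      fix x assume "x \<in> S"
      thus "- (\<Sum>k\<in>UNIV. \<bar>(- xi 0 undefined) $ k\<bar> * ex 0 undefined j k) \<le> x"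
        unfolding S_def using Z_lower[of x j] by simp
    qed
    have cl: "closed S"
    proof -
      have "S = (\<lambda>x. x *\<^sub>R axis j (1::real)) -` Zad0 F T ex xi" unfolding S_def by auto
      moreover have "closed ((\<lambda>x. x *\<^sub>R axis j (1::real)) -` Zad0 F T ex xi)"
        by (rule continuous_closed_vimage[OF Zad0_closed]) (intro continuous_intros)
      ultimately show ?thesis by simp
    qed
    have inS: "Inf S \<in> S" by (rule closed_contains_Inf[OF ne bdd cl])
    have le: "\<forall>x. x *\<^sub>R axis j 1 \<in> Zad0 F T ex xi \<longrightarrow> Inf S \<le> x"
      using cInf_lower[OF _ bdd] unfolding S_def by blast
    have "Inf S *\<^sub>R axis j 1 \<in> Zad0 F T ex xi" using inS unfolding S_def by simp
    moreover hence "\<exists>Y\<in>Phi_ag F T ex xi. initial_value F T Y (Inf S *\<^sub>R axis j 1)" using Zeq by blast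
    ultimately show ?thesis using le unfolding ap by blast
  qed
  show ?thesis using Zeq main by blast
qed

end
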